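(* Let $k$ be an algebraically closed field of characteristic $0$ and let $v$ be a discrete valuation of $K_2=k((X_1,X_2))$ over $k$ (in the sense of the context) with value group $\mathbb{Z}$. Then, after a finite number of monoidal transformations and changes of coordinates, one obtains elements $Y_1,Y_2\in R_{\hat v}$ such that $k((Y_1,Y_2))\subset\widehat K_2$, the valuation $\hat v$ restricts to a valuation $v'$ of $k((Y_1,Y_2))$ extending $v$, and $v'$ is the usual order function of $k((Y_1,Y_2))$ (with respect to $Y_1,Y_2$).
   Context: $R_2=k[[X_1,X_2]]$ with maximal ideal $(X_1,X_2)$ and quotient field $K_2$. A discrete valuation of $K_2\mid k$ is a rank-one discrete valuation trivial on $k$ whose center in $R_2$ is $(X_1,X_2)$. $\widehat K_2$ is the completion of $K_2$ with respect to $v$, $\hat v$ the extension, $R_{\hat v}$ its valuation ring with maximal ideal $\mathfrak m_{\hat v}$. Monoidal transformation: $X_1\mapsto Y_1$, $X_2\mapsto Y_1Y_2$ (when $v(X_2)>v(X_1)$, variables possibly permuted); change of coordinates: $X_1\mapsto Y_1$, $X_2\mapsto Y_2+cY_1$ with $c\in R_{\hat v}\setminus\mathfrak m_{\hat v}$; new variables are regarded as elements of $R_{\hat v}$. The usual order function of $k((Y_1,Y_2))$ assigns to a nonzero power series its order (lowest total degree of a nonzero monomial), extended to the quotient field. *)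

theory Defs
  imports "HOL-Computational_Algebra.Computational_Algebra"
begin

text \<open>R_2 = k[[X_1,X_2]] is the type 'k fps fps: an element f has coefficient
  f $ j $ i at the monomial X_1^i X_2^j; thus X_1 = fps_const fps_X and X_2 = fps_X.
  A discrete valuation with value group Z of K_2 = Frac(R_2) is determined by its
  restriction to R_2 minus 0; we record it as an int-valued function on R_2
  (the value at 0 is irrelevant, infinity by convention).\<close>

definition alg_closed_type :: "'k::field itself \<Rightarrow> bool" where
  "alg_closed_type _ \<longleftrightarrow> (\<forall>p::'k poly. 0 < degree p \<longrightarrow> (\<exists>x. poly p x = 0))"

abbreviation X1 :: "'k::field fps fps" where "X1 \<equiv> fps_const fps_X"
abbreviation X2 :: "'k::field fps fps" where "X2 \<equiv> fps_X"

text \<open>v is (the restriction to R_2 of) a discrete valuation of K_2 over k whose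
  center in R_2 is the maximal ideal (X_1,X_2).\<close>
definition discrete_val_R2 :: "('k::field fps fps \<Rightarrow> int) \<Rightarrow> bool" where
  "discrete_val_R2 v \<longleftrightarrow>
     (\<forall>f g. f \<noteq> 0 \<longrightarrow> g \<noteq> 0 \<longrightarrow> v (f * g) = v f + v g) \<and>
     (\<forall>f g. f \<noteq> 0 \<longrightarrow> g \<noteq> 0 \<longrightarrow> f + g \<noteq> 0 \<longrightarrow> min (v f) (v g) \<le> v (f + g)) \<and>
     (\<forall>c. c \<noteq> 0 \<longrightarrow> v (fps_const (fps_const c)) = 0) \<and>
     (\<forall>f. f \<noteq> 0 \<longrightarrow> 0 \<le> v f) \<and>
     (\<forall>f. f \<noteq> 0 \<longrightarrow> (0 < v f \<longleftrightarrow> f $ 0 $ 0 = 0))"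

text \<open>The value group v(K_2^*) = {v f - v g} is all of Z.\<close>
definition value_group_Z :: "('k::field fps fps \<Rightarrow> int) \<Rightarrow> bool" where
  "value_group_Z v \<longleftrightarrow> (\<exists>f g. f \<noteq> 0 \<and> g \<noteq> 0 \<and> v f = v g + 1)"

definition vge :: "('L::field \<Rightarrow> int) \<Rightarrow> 'L \<Rightarrow> int \<Rightarrow> bool" where
  "vge w x N \<longleftrightarrow> x = 0 \<or> N \<le> w x"

definition is_valuation :: "('L::field \<Rightarrow> int) \<Rightarrow> bool" where
  "is_valuation w \<longleftrightarrow>
     (\<forall>x y. x \<noteq> 0 \<longrightarrow> y \<noteq> 0 \<longrightarrow> w (x * y) = w x + w y) \<and>
     (\<forall>x y. x \<noteq> 0 \<longrightarrow> y \<noteq> 0 \<longrightarrow> x + y \<noteq> 0 \<longrightarrow> min (w x) (w y) \<le> w (x + y))"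

definition v_cauchy :: "('L::field \<Rightarrow> int) \<Rightarrow> (nat \<Rightarrow> 'L) \<Rightarrow> bool" where
  "v_cauchy w s \<longleftrightarrow> (\<forall>N. \<exists>M. \<forall>m\<ge>M. \<forall>n\<ge>M. vge w (s m - s n) N)"

definition v_conv :: "('L::field \<Rightarrow> int) \<Rightarrow> (nat \<Rightarrow> 'L) \<Rightarrow> 'L \<Rightarrow> bool" where
  "v_conv w s l \<longleftrightarrow> (\<forall>N. \<exists>M. \<forall>n\<ge>M. vge w (s n - l) N)"

text \<open>(L, iota, w) is the completion of K_2 = Frac(R_2) with respect to v:
  iota is an injective ring homomorphism R_2 -> L (hence extends to K_2),
  w is a valuation on L extending v, L is complete, and K_2 is dense in L.
  This determines (L, w) up to unique isomorphism over K_2.\<close>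
definition is_completion ::
  "('k::field fps fps \<Rightarrow> int) \<Rightarrow> ('k fps fps \<Rightarrow> 'L::field) \<Rightarrow> ('L \<Rightarrow> int) \<Rightarrow> bool" where
  "is_completion v \<iota> w \<longleftrightarrow>
     \<iota> 0 = 0 \<and> \<iota> 1 = 1 \<and> (\<forall>f g. \<iota> (f + g) = \<iota> f + \<iota> g) \<and>
     (\<forall>f g. \<iota> (f * g) = \<iota> f * \<iota> g) \<and> inj \<iota> \<and>
     is_valuation w \<and>
     (\<forall>f. f \<noteq> 0 \<longrightarrow> w (\<iota> f) = v f) \<and>
     (\<forall>s. v_cauchy w s \<longrightarrow> (\<exists>l. v_conv w s l)) \<and>
     (\<forall>x N. \<exists>f g. g \<noteq> 0 \<and> vge w (x - \<iota> f / \<iota> g) N)"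

text \<open>For the change of coordinates,
  c ranges over the units of the valuation ring R_w, i.e. c \<noteq> 0, w c = 0.\<close>
inductive transf :: "('L::field \<Rightarrow> int) \<Rightarrow> 'L \<times> 'L \<Rightarrow> 'L \<times> 'L \<Rightarrow> bool" for w where
  monoidal1: "x1 \<noteq> 0 \<Longrightarrow> x2 \<noteq> 0 \<Longrightarrow> w x1 < w x2 \<Longrightarrow> transf w (x1, x2) (x1, x2 / x1)"
| monoidal2: "x1 \<noteq> 0 \<Longrightarrow> x2 \<noteq> 0 \<Longrightarrow> w x2 < w x1 \<Longrightarrow> transf w (x1, x2) (x1 / x2, x2)"
| coord1: "c \<noteq> 0 \<Longrightarrow> w c = 0 \<Longrightarrow> transf w (x1, x2) (x1, x2 - c * x1)"
| coord2: "c \<noteq> 0 \<Longrightarrow> w c = 0 \<Longrightarrow> transf w (x1, x2) (x1 - c * x2, x2)"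

text \<open>The power series f(Y_1,Y_2) (f in k[[T_1,T_2]], coefficient of T_1^i T_2^j is
  f $ j $ i) converges in L to l; k is embedded in L via iota.\<close>
definition ps_eval ::
  "('k::field fps fps \<Rightarrow> 'L::field) \<Rightarrow> ('L \<Rightarrow> int) \<Rightarrow> 'L \<Rightarrow> 'L \<Rightarrow> 'k fps fps \<Rightarrow> 'L \<Rightarrow> bool" where
  "ps_eval \<iota> w Y1 Y2 f l \<longleftrightarrow>
     v_conv w (\<lambda>n. \<Sum>i\<le>n. \<Sum>j\<le>n - i. \<iota> (fps_const (fps_const (f $ j $ i))) * Y1 ^ i * Y2 ^ j) l"

definition ord2 :: "'k::zero fps fps \<Rightarrow> nat" where
  "ord2 f = (LEAST d. \<exists>i j. i + j = d \<and> f $ j $ i \<noteq> 0)"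

end

theory Submission
  imports Defs
begin

locale setting =
  fixes v :: "'k::field_char_0 fps fps \<Rightarrow> int"
    and \<iota> :: "'k fps fps \<Rightarrow> 'L::field"
    and w :: "'L \<Rightarrow> int"
  assumes ac: "alg_closed_type TYPE('k)"
    and dv: "discrete_val_R2 v"
    and vg: "value_group_Z v"
    and cp: "is_completion v \<iota> w"
begin

definition \<kappa> :: "'k \<Rightarrow> 'L" where "\<kappa> c = \<iota> (fps_const (fps_const c))"

lemma isval: "is_valuation w" using cp unfolding is_completion_def by blast

lemma w_mult: "x \<noteq> 0 \<Longrightarrow> y \<noteq> 0 \<Longrightarrow> w (x * y) = w x + w y"
  using isval unfolding is_valuation_def by blast

lemma w_add: "x \<noteq> 0 \<Longrightarrow> y \<noteq> 0 \<Longrightarrow> x + y \<noteq> 0 \<Longrightarrow> min (w x) (w y) \<le> w (x + y)"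
  using isval unfolding is_valuation_def by blast

lemma w_one[simp]: "w 1 = 0"
  using w_mult[of 1 1] by simp

lemma w_inverse: "x \<noteq> 0 \<Longrightarrow> w (inverse x) = - w x"
  using w_mult[of x "inverse x"] by simp

lemma w_div: "x \<noteq> 0 \<Longrightarrow> y \<noteq> 0 \<Longrightarrow> w (x / y) = w x - w y"
  by (simp add: divide_inverse w_mult w_inverse)

lemma w_uminus[simp]: "w (- x) = w x"
proof (cases "x = 0")
  case False
  have "w ((-x) * (-x)) = w (x * x)" by simp
  then have "w (-x) + w (-x) = w x + w x" using False w_mult[of "-x" "-x"] w_mult[of x x] by simp
  then show ?thesis by simp
qed simp

lemma w_power: "x \<noteq> 0 \<Longrightarrow> w (x ^ n) = int n * w x"
  by (induction n) (simp_all add: w_mult algebra_simps)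

lemma vge_0[simp]: "vge w 0 N" by (simp add: vge_def)

lemma vge_add: "vge w x N \<Longrightarrow> vge w y N \<Longrightarrow> vge w (x + y) N"
  unfolding vge_def using w_add[of x y] by (cases "x = 0"; cases "y = 0"; cases "x + y = 0"; auto)

lemma vge_uminus[simp]: "vge w (- x) N = vge w x N"
  by (simp add: vge_def)

lemma vge_diff: "vge w x N \<Longrightarrow> vge w y N \<Longrightarrow> vge w (x - y) N"
  using vge_add[of x N "- y"] by simp

lemma vge_mono: "vge w x N \<Longrightarrow> M \<le> N \<Longrightarrow> vge w x M"
  by (auto simp: vge_def)

lemma vge_mult: "vge w x a \<Longrightarrow> vge w y b \<Longrightarrow> vge w (x * y) (a + b)"
  by (cases "x = 0"; cases "y = 0") (auto simp: vge_def w_mult)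

lemma vge_power: "vge w x a \<Longrightarrow> vge w (x ^ n) (int n * a)"
proof (induction n)
  case 0 then show ?case by (simp add: vge_def)
next
  case (Suc n)
  then have "vge w (x * x ^ n) (a + int n * a)" using vge_mult by blast
  then show ?case by (simp add: algebra_simps)
qed

lemma vge_sum: "finite A \<Longrightarrow> (\<And>i. i \<in> A \<Longrightarrow> vge w (f i) N) \<Longrightarrow> vge w (sum f A) N"
  by (induction A rule: finite_induct) (auto intro: vge_add)

lemma vge_all_zero: "(\<And>N. vge w x N) \<Longrightarrow> x = 0"
proof (rule ccontr)
  assume h: "\<And>N. vge w x N" "x \<noteq> 0"
  then have "w x + 1 \<le> w x" using h(1)[of "w x + 1"] by (simp add: vge_def)
  then show False by simp
qed

lemma vge_all_eq: "(\<And>N. vge w (x - y) N) \<Longrightarrow> x = y"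
  using vge_all_zero[of "x - y"] by simp

lemma w_strict:
  assumes "x \<noteq> 0" "vge w y (w x + 1)"
  shows "x + y \<noteq> 0 \<and> w (x + y) = w x"
proof (cases "y = 0")
  case True then show ?thesis using assms by simp
next
  case False
  then have wy: "w y > w x" using assms by (auto simp: vge_def)
  have nz: "x + y \<noteq> 0"
  proof
    assume "x + y = 0" then have "y = - x" by (simp add: add_eq_0_iff2)
    then show False using wy by simp
  qed
  have "min (w x) (w y) \<le> w (x + y)" using w_add[OF assms(1) False nz] .
  moreover have "min (w (x + y)) (w (-y)) \<le> w (x + y + - y)"
    using w_add[of "x + y" "- y"] nz False assms(1) by simp
  ultimately show ?thesis using wy nz by auto
qed

lemma w_ge_min_diff: "x \<noteq> 0 \<Longrightarrow> y \<noteq> 0 \<Longrightarrow> x - y \<noteq> 0 \<Longrightarrow> min (w x) (w y) \<le> w (x - y)"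
  using w_add[of x "- y"] by simp

lemma \<iota>_0[simp]: "\<iota> 0 = 0" using cp unfolding is_completion_def by blast
lemma \<iota>_1[simp]: "\<iota> 1 = 1" using cp unfolding is_completion_def by blast
lemma \<iota>_add[simp]: "\<iota> (f + g) = \<iota> f + \<iota> g" using cp unfolding is_completion_def by blast
lemma \<iota>_mult[simp]: "\<iota> (f * g) = \<iota> f * \<iota> g" using cp unfolding is_completion_def by blast
lemma \<iota>_inj: "inj \<iota>" using cp unfolding is_completion_def by blast
lemma w_\<iota>: "f \<noteq> 0 \<Longrightarrow> w (\<iota> f) = v f" using cp unfolding is_completion_def by blast
lemma complete: "v_cauchy w s \<Longrightarrow> \<exists>l. v_conv w s l" using cp unfolding is_completion_def by blast

lemma \<iota>_uminus[simp]: "\<iota> (- f) = - \<iota> f"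
  using \<iota>_add[of "-f" f] by (simp add: eq_neg_iff_add_eq_0)
lemma \<iota>_diff[simp]: "\<iota> (f - g) = \<iota> f - \<iota> g"
  using \<iota>_add[of f "-g"] by simp
lemma \<iota>_power[simp]: "\<iota> (f ^ n) = \<iota> f ^ n"
  by (induction n) simp_all
lemma \<iota>_sum: "\<iota> (sum f A) = (\<Sum>x\<in>A. \<iota> (f x))"
  by (induction A rule: infinite_finite_induct) simp_all
lemma \<iota>_eq0: "\<iota> f = 0 \<longleftrightarrow> f = 0"
  using \<iota>_inj \<iota>_0 by (metis injD)

lemma v_mult: "f \<noteq> 0 \<Longrightarrow> g \<noteq> 0 \<Longrightarrow> v (f * g) = v f + v g"
  using dv unfolding discrete_val_R2_def by blast
lemma v_const: "c \<noteq> 0 \<Longrightarrow> v (fps_const (fps_const c)) = 0"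
  using dv unfolding discrete_val_R2_def by blast
lemma v_nonneg: "f \<noteq> 0 \<Longrightarrow> 0 \<le> v f"
  using dv unfolding discrete_val_R2_def by blast
lemma v_pos: "f \<noteq> 0 \<Longrightarrow> (0 < v f \<longleftrightarrow> f $ 0 $ 0 = 0)"
  using dv unfolding discrete_val_R2_def by blast

lemma \<kappa>_0[simp]: "\<kappa> 0 = 0" by (simp add: \<kappa>_def)
lemma \<kappa>_1[simp]: "\<kappa> 1 = 1" by (simp add: \<kappa>_def)
lemma \<kappa>_add: "\<kappa> (a + b) = \<kappa> a + \<kappa> b"
  by (simp add: \<kappa>_def flip: fps_const_add)
lemma \<kappa>_mult: "\<kappa> (a * b) = \<kappa> a * \<kappa> b"
  by (simp add: \<kappa>_def flip: fps_const_mult)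
lemma \<kappa>_uminus: "\<kappa> (- a) = - \<kappa> a"
  by (simp add: \<kappa>_def flip: fps_const_neg)
lemma \<kappa>_diff: "\<kappa> (a - b) = \<kappa> a - \<kappa> b"
  by (simp add: \<kappa>_def flip: fps_const_sub)
lemma \<kappa>_nz: "c \<noteq> 0 \<Longrightarrow> \<kappa> c \<noteq> 0"
  by (simp add: \<kappa>_def \<iota>_eq0)
lemma w_\<kappa>: "c \<noteq> 0 \<Longrightarrow> w (\<kappa> c) = 0"
  by (simp add: \<kappa>_def w_\<iota> v_const)
lemma vge_\<kappa>: "vge w (\<kappa> c) 0"
  by (cases "c = 0") (simp_all add: vge_def w_\<kappa>)

end

context setting begin

lemma \<kappa>_sum: "\<kappa> (sum f A) = (\<Sum>x\<in>A. \<kappa> (f x))"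
  by (induction A rule: infinite_finite_induct) (simp_all add: \<kappa>_add)

definition mon :: "'L \<Rightarrow> 'L \<Rightarrow> 'k fps fps \<Rightarrow> nat \<times> nat \<Rightarrow> 'L" where
  "mon Y1 Y2 f p = \<kappa> (f $ snd p $ fst p) * Y1 ^ fst p * Y2 ^ snd p"

definition D :: "nat \<Rightarrow> (nat \<times> nat) set" where "D n = {p. fst p + snd p \<le> n}"

lemma D_sub: "D n \<subseteq> {..n} \<times> {..n}" by (auto simp: D_def)
lemma finite_D[simp]: "finite (D n)" by (rule finite_subset[OF D_sub]) simp

definition psum :: "'L \<Rightarrow> 'L \<Rightarrow> 'k fps fps \<Rightarrow> nat \<Rightarrow> 'L" where
  "psum Y1 Y2 f n = (\<Sum>p\<in>D n. mon Y1 Y2 f p)"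

lemma psum_eq: "psum Y1 Y2 f n =
   (\<Sum>i\<le>n. \<Sum>j\<le>n - i. \<iota> (fps_const (fps_const (f $ j $ i))) * Y1 ^ i * Y2 ^ j)"
proof -
  have "D n = Sigma {..n} (\<lambda>i. {..n - i})" by (auto simp: D_def)
  then show ?thesis unfolding psum_def mon_def \<kappa>_def
    by (simp add: sum.Sigma split_def)
qed

definition ok :: "'L \<Rightarrow> 'L \<Rightarrow> int \<Rightarrow> bool" where
  "ok Y1 Y2 m \<longleftrightarrow> 1 \<le> m \<and> vge w Y1 m \<and> vge w Y2 m"

lemma mon_vge:
  assumes "ok Y1 Y2 m"
  shows "vge w (mon Y1 Y2 f p) (m * int (fst p + snd p))"
proof -
  have "vge w (\<kappa> (f $ snd p $ fst p) * Y1 ^ fst p * Y2 ^ snd p) (0 + int (fst p) * m + int (snd p) * m)"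
    using assms unfolding ok_def by (intro vge_mult vge_power vge_\<kappa>) auto
  then show ?thesis unfolding mon_def by (simp add: algebra_simps)
qed

lemma mon_vge': "ok Y1 Y2 m \<Longrightarrow> int n \<le> int (fst p + snd p) \<Longrightarrow> vge w (mon Y1 Y2 f p) (m * int n)"
  by (rule vge_mono[OF mon_vge]) (auto simp: ok_def mult_left_mono)

lemma psum_vge0: "ok Y1 Y2 m \<Longrightarrow> vge w (psum Y1 Y2 f n) 0"
  unfolding psum_def
  by (rule vge_sum) (use mon_vge'[of Y1 Y2 m 0] in auto)

lemma psum_diff:
  assumes "ok Y1 Y2 m" "n \<le> n'"
  shows "vge w (psum Y1 Y2 f n' - psum Y1 Y2 f n) (m * int (n + 1))"
proof -
  have sub: "D n \<subseteq> D n'" using assms(2) by (auto simp: D_def)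
  have "psum Y1 Y2 f n' - psum Y1 Y2 f n = (\<Sum>p\<in>D n' - D n. mon Y1 Y2 f p)"
    unfolding psum_def by (simp add: sum_diff[OF finite_D sub])
  also have "vge w \<dots> (m * int (n + 1))"
  proof (rule vge_sum[OF finite_Diff[OF finite_D]])
    fix p assume "p \<in> D n' - D n"
    then have "int (n + 1) \<le> int (fst p + snd p)" by (auto simp: D_def)
    then show "vge w (mon Y1 Y2 f p) (m * int (n + 1))" by (rule mon_vge'[OF assms(1)])
  qed
  finally show ?thesis .
qed

lemma psum_cauchy:
  assumes "ok Y1 Y2 m"
  shows "v_cauchy w (psum Y1 Y2 f)"
  unfolding v_cauchy_def
proof
  fix N :: int
  show "\<exists>M. \<forall>a\<ge>M. \<forall>b\<ge>M. vge w (psum Y1 Y2 f a - psum Y1 Y2 f b) N"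
  proof (intro exI allI impI)
    fix a b assume ab: "nat N \<le> a" "nat N \<le> b"
    have m1: "1 \<le> m" using assms by (simp add: ok_def)
    have Nle: "N \<le> m * int (min a b + 1)"
    proof -
      have "N \<le> int (min a b + 1)" using ab by linarith
      also have "\<dots> \<le> m * int (min a b + 1)" using m1 by (simp add: mult_le_cancel_right1)
      finally show ?thesis .
    qed
    show "vge w (psum Y1 Y2 f a - psum Y1 Y2 f b) N"
    proof (cases "a \<le> b")
      case True
      then have "vge w (psum Y1 Y2 f b - psum Y1 Y2 f a) (m * int (min a b + 1))"
        using psum_diff[OF assms True] by simp
      then have "vge w (psum Y1 Y2 f a - psum Y1 Y2 f b) (m * int (min a b + 1))"
        by (metis minus_diff_eq vge_uminus)
      then show ?thesis using Nle vge_mono by blast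
    next
      case False
      then have "vge w (psum Y1 Y2 f a - psum Y1 Y2 f b) (m * int (min a b + 1))"
        using psum_diff[OF assms, of b a] by simp
      then show ?thesis using Nle vge_mono by blast
    qed
  qed
qed

definition ev :: "'L \<Rightarrow> 'L \<Rightarrow> 'k fps fps \<Rightarrow> 'L" where
  "ev Y1 Y2 f = (SOME l. v_conv w (psum Y1 Y2 f) l)"

lemma ev_conv: "ok Y1 Y2 m \<Longrightarrow> v_conv w (psum Y1 Y2 f) (ev Y1 Y2 f)"
  unfolding ev_def using complete[OF psum_cauchy] by (rule someI_ex)

lemma ps_eval_ev: "ok Y1 Y2 m \<Longrightarrow> ps_eval \<iota> w Y1 Y2 f (ev Y1 Y2 f)"
  using ev_conv unfolding ps_eval_def by (simp add: psum_eq[symmetric])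

lemma ev_approx:
  assumes "ok Y1 Y2 m"
  shows "vge w (ev Y1 Y2 f - psum Y1 Y2 f n) (m * int (n + 1))"
proof -
  obtain M where M: "\<forall>k\<ge>M. vge w (psum Y1 Y2 f k - ev Y1 Y2 f) (m * int (n + 1))"
    using ev_conv[OF assms, of f] unfolding v_conv_def by blast
  define k where "k = max M n"
  have 1: "vge w (psum Y1 Y2 f k - ev Y1 Y2 f) (m * int (n + 1))" using M by (simp add: k_def)
  have 2: "vge w (psum Y1 Y2 f k - psum Y1 Y2 f n) (m * int (n + 1))"
    using psum_diff[OF assms, of n k] by (simp add: k_def)
  have "ev Y1 Y2 f - psum Y1 Y2 f n = (psum Y1 Y2 f k - psum Y1 Y2 f n) - (psum Y1 Y2 f k - ev Y1 Y2 f)"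
    by simp
  then show ?thesis using vge_diff[OF 2 1] by simp
qed

lemma ev_eqI:
  assumes "ok Y1 Y2 m" "\<And>n. vge w (z - psum Y1 Y2 f n) (int (n + 1))"
  shows "z = ev Y1 Y2 f"
proof (rule vge_all_eq)
  fix N :: int
  define n where "n = nat N"
  have m1: "1 \<le> m" using assms by (simp add: ok_def)
  have a: "vge w (ev Y1 Y2 f - psum Y1 Y2 f n) (int (n + 1))"
    using ev_approx[OF assms(1), of f n] m1 by (elim vge_mono) (simp add: mult_le_cancel_right1)
  have "z - ev Y1 Y2 f = (z - psum Y1 Y2 f n) - (ev Y1 Y2 f - psum Y1 Y2 f n)" by simp
  then have "vge w (z - ev Y1 Y2 f) (int (n + 1))" using vge_diff[OF assms(2) a] by simp
  then show "vge w (z - ev Y1 Y2 f) N" by (rule vge_mono) (simp add: n_def)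
qed

lemma ev_vge0:
  assumes "ok Y1 Y2 m" shows "vge w (ev Y1 Y2 f) 0"
proof -
  have "ev Y1 Y2 f = (ev Y1 Y2 f - psum Y1 Y2 f 0) + psum Y1 Y2 f 0" by simp
  moreover have "vge w (ev Y1 Y2 f - psum Y1 Y2 f 0) 0"
    using ev_approx[OF assms, of f 0] assms by (elim vge_mono) (simp add: ok_def)
  ultimately show ?thesis using vge_add psum_vge0[OF assms] by metis
qed

lemma psum_add: "psum Y1 Y2 (f + g) n = psum Y1 Y2 f n + psum Y1 Y2 g n"
  unfolding psum_def mon_def by (simp add: \<kappa>_add algebra_simps sum.distrib)

lemma psum_uminus: "psum Y1 Y2 (- f) n = - psum Y1 Y2 f n"
  unfolding psum_def mon_def by (simp add: \<kappa>_uminus sum_negf)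

lemma ev_add: "ok Y1 Y2 m \<Longrightarrow> ev Y1 Y2 (f + g) = ev Y1 Y2 f + ev Y1 Y2 g"
proof (rule sym, rule ev_eqI)
  fix n assume ok: "ok Y1 Y2 m"
  have m1: "1 \<le> m" using ok by (simp add: ok_def)
  have "vge w ((ev Y1 Y2 f - psum Y1 Y2 f n) + (ev Y1 Y2 g - psum Y1 Y2 g n)) (m * int (n + 1))"
    by (intro vge_add ev_approx ok)
  then have "vge w ((ev Y1 Y2 f - psum Y1 Y2 f n) + (ev Y1 Y2 g - psum Y1 Y2 g n)) (int (n + 1))"
    using m1 by (elim vge_mono) (simp add: mult_le_cancel_right1)
  then show "vge w (ev Y1 Y2 f + ev Y1 Y2 g - psum Y1 Y2 (f + g) n) (int (n + 1))"
    by (simp add: psum_add algebra_simps)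
qed

lemma ev_0: "ok Y1 Y2 m \<Longrightarrow> ev Y1 Y2 0 = 0"
proof -
  assume "ok Y1 Y2 m"
  then have "ev Y1 Y2 0 = ev Y1 Y2 0 + ev Y1 Y2 0" using ev_add[of Y1 Y2 m 0 0] by simp
  then show ?thesis by (metis add_cancel_left_right)
qed

lemma ev_uminus: "ok Y1 Y2 m \<Longrightarrow> ev Y1 Y2 (- f) = - ev Y1 Y2 f"
  using ev_add[of Y1 Y2 m f "- f"] ev_0[of Y1 Y2 m]
  by (metis add.commute eq_neg_iff_add_eq_0 add.right_inverse)

lemma ev_diff: "ok Y1 Y2 m \<Longrightarrow> ev Y1 Y2 (f - g) = ev Y1 Y2 f - ev Y1 Y2 g"
  using ev_add[of Y1 Y2 m f "- g"] ev_uminus[of Y1 Y2 m g] by simp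

end

context setting begin

lemma prod_coeff: "(f * g) $ j $ i = (\<Sum>j1 = 0..j. \<Sum>i1 = 0..i. f $ j1 $ i1 * g $ (j - j1) $ (i - i1))"
  by (simp add: fps_mult_nth fps_sum_nth)

definition Apairs :: "nat \<Rightarrow> ((nat \<times> nat) \<times> (nat \<times> nat)) set" where
  "Apairs n = {(p, q). fst p + fst q + snd p + snd q \<le> n}"

lemma finite_Apairs: "finite (Apairs n)"
proof -
  have "Apairs n \<subseteq> D n \<times> D n" by (auto simp: Apairs_def D_def)
  then show ?thesis by (rule finite_subset) simp
qed

lemma psum_mult_eq:
  "psum Y1 Y2 (f * g) n = (\<Sum>pq\<in>Apairs n. mon Y1 Y2 f (fst pq) * mon Y1 Y2 g (snd pq))"
proof -
  define B where "B = Sigma (D n) (\<lambda>s. {0..fst s} \<times> {0..snd s})"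
  have "psum Y1 Y2 (f * g) n =
     (\<Sum>s\<in>D n. \<Sum>p\<in>{0..fst s} \<times> {0..snd s}.
        \<kappa> (f $ snd p $ fst p) * \<kappa> (g $ (snd s - snd p) $ (fst s - fst p)) * Y1 ^ fst s * Y2 ^ snd s)"
    unfolding psum_def mon_def
  proof (rule sum.cong[OF refl])
    fix s :: "nat \<times> nat"
    show "\<kappa> ((f * g) $ snd s $ fst s) * Y1 ^ fst s * Y2 ^ snd s =
      (\<Sum>p\<in>{0..fst s} \<times> {0..snd s}.
        \<kappa> (f $ snd p $ fst p) * \<kappa> (g $ (snd s - snd p) $ (fst s - fst p)) * Y1 ^ fst s * Y2 ^ snd s)"
      apply (simp add: prod_coeff \<kappa>_sum \<kappa>_mult sum_distrib_right sum.cartesian_product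
          sum.swap[of _ "{0..fst s}"] split_def)
      by (rule sum.reindex_bij_witness[where i=prod.swap and j=prod.swap]) auto
  qed
  also have "\<dots> = (\<Sum>sp\<in>B. \<kappa> (f $ snd (snd sp) $ fst (snd sp)) *
       \<kappa> (g $ (snd (fst sp) - snd (snd sp)) $ (fst (fst sp) - fst (snd sp))) *
       Y1 ^ fst (fst sp) * Y2 ^ snd (fst sp))"
    unfolding B_def by (subst sum.Sigma) (auto simp: split_def)
  also have "\<dots> = (\<Sum>pq\<in>Apairs n. mon Y1 Y2 f (fst pq) * mon Y1 Y2 g (snd pq))"
  proof (rule sum.reindex_bij_witness[where i = "\<lambda>pq. ((fst (fst pq) + fst (snd pq), snd (fst pq) + snd (snd pq)), fst pq)"
        and j = "\<lambda>sp. (snd sp, (fst (fst sp) - fst (snd sp), snd (fst sp) - snd (snd sp)))"])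
    fix sp assume "sp \<in> B"
    then show "((fst (fst (snd sp, (fst (fst sp) - fst (snd sp), snd (fst sp) - snd (snd sp)))) +
             fst (snd (snd sp, (fst (fst sp) - fst (snd sp), snd (fst sp) - snd (snd sp)))),
             snd (fst (snd sp, (fst (fst sp) - fst (snd sp), snd (fst sp) - snd (snd sp)))) +
             snd (snd (snd sp, (fst (fst sp) - fst (snd sp), snd (fst sp) - snd (snd sp))))),
            fst (snd sp, (fst (fst sp) - fst (snd sp), snd (fst sp) - snd (snd sp)))) = sp"
      by (auto simp: B_def)
  next
    fix sp assume "sp \<in> B"
    then show "(snd sp, (fst (fst sp) - fst (snd sp), snd (fst sp) - snd (snd sp))) \<in> Apairs n"
      by (auto simp: B_def Apairs_def D_def)
  next
    fix pq assume "pq \<in> Apairs n"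
    then show "(snd (((fst (fst pq) + fst (snd pq), snd (fst pq) + snd (snd pq)), fst pq)),
           (fst (fst ((fst (fst pq) + fst (snd pq), snd (fst pq) + snd (snd pq)), fst pq)) -
            fst (snd ((fst (fst pq) + fst (snd pq), snd (fst pq) + snd (snd pq)), fst pq)),
            snd (fst ((fst (fst pq) + fst (snd pq), snd (fst pq) + snd (snd pq)), fst pq)) -
            snd (snd ((fst (fst pq) + fst (snd pq), snd (fst pq) + snd (snd pq)), fst pq)))) = pq"
      by auto
  next
    fix pq assume "pq \<in> Apairs n"
    then show "((fst (fst pq) + fst (snd pq), snd (fst pq) + snd (snd pq)), fst pq) \<in> B"
      by (auto simp: B_def Apairs_def D_def)
  next
    fix sp assume "sp \<in> B"
    then show "mon Y1 Y2 f (fst (snd sp, (fst (fst sp) - fst (snd sp), snd (fst sp) - snd (snd sp)))) *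
           mon Y1 Y2 g (snd (snd sp, (fst (fst sp) - fst (snd sp), snd (fst sp) - snd (snd sp)))) =
           \<kappa> (f $ snd (snd sp) $ fst (snd sp)) *
           \<kappa> (g $ (snd (fst sp) - snd (snd sp)) $ (fst (fst sp) - fst (snd sp))) *
           Y1 ^ fst (fst sp) * Y2 ^ snd (fst sp)"
    proof -
      assume "sp \<in> B"
      then have le: "fst (snd sp) \<le> fst (fst sp)" "snd (snd sp) \<le> snd (fst sp)" by (auto simp: B_def)
      then have e1: "Y1 ^ fst (fst sp) = Y1 ^ fst (snd sp) * Y1 ^ (fst (fst sp) - fst (snd sp))"
        and e2: "Y2 ^ snd (fst sp) = Y2 ^ snd (snd sp) * Y2 ^ (snd (fst sp) - snd (snd sp))"
        by (simp_all flip: power_add)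
      show ?thesis unfolding mon_def e1 e2 by (simp add: algebra_simps)
    qed
  qed
  finally show ?thesis .
qed

lemma psum_mult_prod:
  "psum Y1 Y2 f n * psum Y1 Y2 g n = (\<Sum>pq\<in>D n \<times> D n. mon Y1 Y2 f (fst pq) * mon Y1 Y2 g (snd pq))"
  unfolding psum_def by (simp add: sum_product sum.cartesian_product split_def)

lemma psum_mult_diff:
  assumes ok: "ok Y1 Y2 m"
  shows "vge w (psum Y1 Y2 f n * psum Y1 Y2 g n - psum Y1 Y2 (f * g) n) (m * int (n + 1))"
proof -
  have sub: "Apairs n \<subseteq> D n \<times> D n" by (auto simp: Apairs_def D_def)
  have "psum Y1 Y2 f n * psum Y1 Y2 g n - psum Y1 Y2 (f * g) n =
     (\<Sum>pq\<in>D n \<times> D n - Apairs n. mon Y1 Y2 f (fst pq) * mon Y1 Y2 g (snd pq))"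
    unfolding psum_mult_prod psum_mult_eq by (simp add: sum_diff[OF _ sub])
  also have "vge w \<dots> (m * int (n + 1))"
  proof (rule vge_sum)
    show "finite (D n \<times> D n - Apairs n)" by simp
  next
    fix pq assume "pq \<in> D n \<times> D n - Apairs n"
    then have h: "n + 1 \<le> fst (fst pq) + snd (fst pq) + (fst (snd pq) + snd (snd pq))"
      by (auto simp: Apairs_def split_def)
    have "vge w (mon Y1 Y2 f (fst pq) * mon Y1 Y2 g (snd pq))
        (m * int (fst (fst pq) + snd (fst pq)) + m * int (fst (snd pq) + snd (snd pq)))"
      by (intro vge_mult mon_vge ok)
    then show "vge w (mon Y1 Y2 f (fst pq) * mon Y1 Y2 g (snd pq)) (m * int (n + 1))"
    proof (rule vge_mono)
      have "m * int (n + 1) \<le> m * int (fst (fst pq) + snd (fst pq) + (fst (snd pq) + snd (snd pq)))"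
        using ok h by (intro mult_left_mono) (auto simp: ok_def)
      then show "m * int (n + 1) \<le> m * int (fst (fst pq) + snd (fst pq)) + m * int (fst (snd pq) + snd (snd pq))"
        by (simp add: algebra_simps)
    qed
  qed
  finally show ?thesis .
qed

lemma ev_mult:
  assumes ok: "ok Y1 Y2 m"
  shows "ev Y1 Y2 (f * g) = ev Y1 Y2 f * ev Y1 Y2 g"
proof (rule sym, rule ev_eqI[OF ok])
  fix n
  have m1: "1 \<le> m" using ok by (simp add: ok_def)
  let ?F = "ev Y1 Y2 f" and ?G = "ev Y1 Y2 g" and ?f = "psum Y1 Y2 f n" and ?g = "psum Y1 Y2 g n"
  have "?F * ?G - psum Y1 Y2 (f * g) n = (?F - ?f) * ?G + ?f * (?G - ?g) + (?f * ?g - psum Y1 Y2 (f * g) n)"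
    by (simp add: algebra_simps)
  moreover have "vge w ((?F - ?f) * ?G) (m * int (n + 1) + 0)"
    by (intro vge_mult ev_approx[OF ok] ev_vge0[OF ok])
  moreover have "vge w (?f * (?G - ?g)) (0 + m * int (n + 1))"
    by (intro vge_mult ev_approx[OF ok] psum_vge0[OF ok])
  moreover have "vge w (?f * ?g - psum Y1 Y2 (f * g) n) (m * int (n + 1))"
    by (rule psum_mult_diff[OF ok])
  ultimately have "vge w (?F * ?G - psum Y1 Y2 (f * g) n) (m * int (n + 1))"
    by (metis add_0 add.right_neutral vge_add)
  then show "vge w (?F * ?G - psum Y1 Y2 (f * g) n) (int (n + 1))"
    using m1 by (elim vge_mono) (simp add: mult_le_cancel_right1)
qed

end

context setting begin

lemma mon_zero: "f $ snd p $ fst p = 0 \<Longrightarrow> mon Y1 Y2 f p = 0"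
  by (simp add: mon_def)

lemma psum_single:
  assumes "q \<in> D n" "\<And>p. p \<in> D n \<Longrightarrow> p \<noteq> q \<Longrightarrow> f $ snd p $ fst p = 0"
  shows "psum Y1 Y2 f n = mon Y1 Y2 f q"
proof -
  have "psum Y1 Y2 f n = mon Y1 Y2 f q + (\<Sum>p\<in>D n - {q}. mon Y1 Y2 f p)"
    unfolding psum_def using assms(1) by (simp add: sum.remove)
  also have "(\<Sum>p\<in>D n - {q}. mon Y1 Y2 f p) = 0"
    by (rule sum.neutral) (use assms(2) in \<open>auto intro: mon_zero\<close>)
  finally show ?thesis by simp
qed

lemma psum_zero:
  assumes "\<And>p. p \<in> D n \<Longrightarrow> f $ snd p $ fst p = 0"
  shows "psum Y1 Y2 f n = 0"
  unfolding psum_def by (rule sum.neutral) (use assms in \<open>auto intro: mon_zero\<close>)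

lemma ev_const:
  assumes ok: "ok Y1 Y2 m"
  shows "ev Y1 Y2 (fps_const (fps_const c)) = \<kappa> c"
proof (rule sym, rule ev_eqI[OF ok])
  fix n
  have "psum Y1 Y2 (fps_const (fps_const c)) n = mon Y1 Y2 (fps_const (fps_const c)) (0, 0)"
    by (rule psum_single) (auto simp: D_def)
  then show "vge w (\<kappa> c - psum Y1 Y2 (fps_const (fps_const c)) n) (int (n + 1))"
    by (simp add: mon_def)
qed

lemma ev_1: "ok Y1 Y2 m \<Longrightarrow> ev Y1 Y2 1 = 1"
  using ev_const[of Y1 Y2 m 1] by simp

lemma ev_X1:
  assumes ok: "ok Y1 Y2 m"
  shows "ev Y1 Y2 (fps_const fps_X) = Y1"
proof (rule sym, rule ev_eqI[OF ok])
  fix n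
  show "vge w (Y1 - psum Y1 Y2 (fps_const fps_X) n) (int (n + 1))"
  proof (cases n)
    case 0
    have "psum Y1 Y2 (fps_const fps_X) n = 0"
      by (rule psum_zero) (auto simp: D_def 0)
    then show ?thesis using ok 0 by (auto simp: ok_def intro: vge_mono)
  next
    case (Suc k)
    have "psum Y1 Y2 (fps_const fps_X) n = mon Y1 Y2 (fps_const fps_X) (1, 0)"
      by (rule psum_single) (auto simp: D_def Suc)
    then show ?thesis by (simp add: mon_def)
  qed
qed

lemma ev_X2:
  assumes ok: "ok Y1 Y2 m"
  shows "ev Y1 Y2 fps_X = Y2"
proof (rule sym, rule ev_eqI[OF ok])
  fix n
  show "vge w (Y2 - psum Y1 Y2 fps_X n) (int (n + 1))"
  proof (cases n)
    case 0
    have "psum Y1 Y2 fps_X n = 0"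
      by (rule psum_zero) (auto simp: D_def 0)
    then show ?thesis using ok 0 by (auto simp: ok_def intro: vge_mono)
  next
    case (Suc k)
    have "psum Y1 Y2 fps_X n = mon Y1 Y2 fps_X (0, 1)"
      by (rule psum_single) (auto simp: D_def Suc)
    then show ?thesis by (simp add: mon_def)
  qed
qed

lemma ev_power: "ok Y1 Y2 m \<Longrightarrow> ev Y1 Y2 (f ^ n) = ev Y1 Y2 f ^ n"
  by (induction n) (simp_all add: ev_1 ev_mult)

lemma ev_sum: "ok Y1 Y2 m \<Longrightarrow> ev Y1 Y2 (sum f A) = (\<Sum>x\<in>A. ev Y1 Y2 (f x))"
  by (induction A rule: infinite_finite_induct) (simp_all add: ev_0 ev_add)

lemma ev_cont:
  assumes ok: "ok Y1 Y2 m" and z: "\<And>i j. i + j < N \<Longrightarrow> f $ j $ i = 0"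
  shows "vge w (ev Y1 Y2 f) (m * int N)"
proof (cases N)
  case 0 then show ?thesis using ev_vge0[OF ok] by simp
next
  case (Suc k)
  have "psum Y1 Y2 f k = 0" by (rule psum_zero) (auto simp: D_def Suc intro!: z)
  then show ?thesis using ev_approx[OF ok, of f k] Suc by simp
qed

definition vR :: "'k fps fps \<Rightarrow> int \<Rightarrow> bool" where "vR h N \<longleftrightarrow> h = 0 \<or> N \<le> v h"

lemma vR_add: "vR f N \<Longrightarrow> vR g N \<Longrightarrow> vR (f + g) N"
proof -
  assume a: "vR f N" "vR g N"
  show ?thesis
  proof (cases "f = 0 \<or> g = 0 \<or> f + g = 0")
    case True then show ?thesis using a by (auto simp: vR_def)
  next
    case False
    then have "min (v f) (v g) \<le> v (f + g)" using dv unfolding discrete_val_R2_def by blast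
    then show ?thesis using a False by (auto simp: vR_def)
  qed
qed

lemma vR_mult: "vR f a \<Longrightarrow> vR g b \<Longrightarrow> vR (f * g) (a + b)"
  unfolding vR_def by (cases "f = 0"; cases "g = 0") (auto simp: v_mult)

lemma vX1: "vR (fps_const fps_X :: 'k fps fps) 1"
proof -
  have "(fps_const fps_X :: 'k fps fps) $ 0 $ 1 = 1" by simp
  then have ne: "(fps_const fps_X :: 'k fps fps) \<noteq> 0" by (metis fps_zero_nth zero_neq_one)
  then show ?thesis using v_pos[OF ne] by (simp add: vR_def)
qed

lemma vX2: "vR (fps_X :: 'k fps fps) 1"
proof -
  have ne: "(fps_X :: 'k fps fps) \<noteq> 0" by simp
  then show ?thesis using v_pos[OF ne] by (simp add: vR_def)
qed

lemma vR_ord: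
  "(\<And>i j. i + j < N \<Longrightarrow> h $ j $ i = 0) \<Longrightarrow> vR h (int N)"
proof (induction N arbitrary: h)
  case 0
  then show ?case using v_nonneg[of h] by (auto simp: vR_def)
next
  case (Suc N)
  define A where "A = fps_const (fps_shift 1 (h $ 0))"
  define B where "B = fps_shift 1 h"
  have h00: "h $ 0 $ 0 = 0" using Suc.prems[of 0 0] by simp
  have dec: "h = fps_const fps_X * A + fps_X * B"
  proof (rule fps_ext)
    fix j show "h $ j = (fps_const fps_X * A + fps_X * B) $ j"
    proof (cases j)
      case 0
      show ?thesis unfolding A_def 0
        by (rule fps_ext) (simp add: h00)
    next
      case (Suc j') then show ?thesis by (simp add: A_def B_def)
    qed
  qed
  have "vR A (int N)"
    by (rule Suc.IH) (use Suc.prems in \<open>auto simp: A_def\<close>)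
  then have a: "vR (fps_const fps_X * A) (1 + int N)" by (rule vR_mult[OF vX1])
  have "vR B (int N)"
    by (rule Suc.IH) (use Suc.prems in \<open>auto simp: B_def\<close>)
  then have b: "vR (fps_X * B) (1 + int N)" by (rule vR_mult[OF vX2])
  show ?case using vR_add[OF a b] dec by (simp add: add.commute)
qed

lemma vR_vge: "vR h N \<Longrightarrow> vge w (\<iota> h) N"
  unfolding vR_def vge_def by (cases "h = 0") (auto simp: w_\<iota> \<iota>_eq0)

inductive_set alg :: "'L \<Rightarrow> 'L \<Rightarrow> 'L set" for a b where
  alg_const: "\<kappa> c \<in> alg a b"
| alg_g1: "a \<in> alg a b"
| alg_g2: "b \<in> alg a b"
| alg_add: "x \<in> alg a b \<Longrightarrow> y \<in> alg a b \<Longrightarrow> x + y \<in> alg a b"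
| alg_mult: "x \<in> alg a b \<Longrightarrow> y \<in> alg a b \<Longrightarrow> x * y \<in> alg a b"

lemma alg_sub:
  assumes "\<And>c. \<kappa> c \<in> S" "a \<in> S" "b \<in> S"
    "\<And>x y. x \<in> S \<Longrightarrow> y \<in> S \<Longrightarrow> x + y \<in> S" "\<And>x y. x \<in> S \<Longrightarrow> y \<in> S \<Longrightarrow> x * y \<in> S"
  shows "alg a b \<subseteq> S"
proof
  fix x assume "x \<in> alg a b" then show "x \<in> S"
    by (induction rule: alg.induct) (use assms in auto)
qed

lemma alg_swap: "alg a b = alg b a"
  by (intro equalityI alg_sub; (rule alg_const | rule alg_g1 | rule alg_g2 | erule (1) alg_add | erule (1) alg_mult))

lemma alg_diff: "x \<in> alg a b \<Longrightarrow> y \<in> alg a b \<Longrightarrow> x - y \<in> alg a b"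
proof -
  assume "x \<in> alg a b" "y \<in> alg a b"
  moreover have "x - y = x + \<kappa> (-1) * y" by (simp add: \<kappa>_uminus)
  ultimately show ?thesis by (metis alg_add alg_mult alg_const)
qed

lemma alg_power: "x \<in> alg a b \<Longrightarrow> x ^ n \<in> alg a b"
proof (induction n)
  case 0 then show ?case using alg_const[of 1 a b] by simp
next
  case (Suc n) then show ?case using alg_mult[of x a b "x ^ n"] Suc.prems by simp
qed

lemma alg_sum: "finite A \<Longrightarrow> (\<And>i. i \<in> A \<Longrightarrow> f i \<in> alg a b) \<Longrightarrow> sum f A \<in> alg a b"
proof (induction A rule: finite_induct)
  case empty then show ?case using alg_const[of 0 a b] by simp
next
  case (insert x F) then show ?case using alg_add[of "f x" a b "sum f F"] by simp
qed

lemma ev_alg: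
  assumes ok: "ok Y1 Y2 m"
  shows "alg Y1 Y2 \<subseteq> {z. \<exists>f. z = ev Y1 Y2 f}"
proof (rule alg_sub)
  fix c have "\<kappa> c = ev Y1 Y2 (fps_const (fps_const c))" using ev_const[OF ok] by simp
  then show "\<kappa> c \<in> {z. \<exists>f. z = ev Y1 Y2 f}" by blast
next
  have "Y1 = ev Y1 Y2 (fps_const fps_X)" using ev_X1[OF ok] by simp
  then show "Y1 \<in> {z. \<exists>f. z = ev Y1 Y2 f}" by blast
next
  have "Y2 = ev Y1 Y2 fps_X" using ev_X2[OF ok] by simp
  then show "Y2 \<in> {z. \<exists>f. z = ev Y1 Y2 f}" by blast
next
  fix x y assume "x \<in> {z. \<exists>f. z = ev Y1 Y2 f}" "y \<in> {z. \<exists>f. z = ev Y1 Y2 f}"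
  then obtain f g where "x = ev Y1 Y2 f" "y = ev Y1 Y2 g" by blast
  then have "x + y = ev Y1 Y2 (f + g)" "x * y = ev Y1 Y2 (f * g)"
    using ev_add[OF ok] ev_mult[OF ok] by simp_all
  then show "x + y \<in> {z. \<exists>f. z = ev Y1 Y2 f}" "x * y \<in> {z. \<exists>f. z = ev Y1 Y2 f}"
    by blast+
qed

definition trunc :: "nat \<Rightarrow> 'k fps fps \<Rightarrow> 'k fps fps" where
  "trunc N a = (\<Sum>p\<in>D N. fps_const (fps_const (a $ snd p $ fst p) * fps_X ^ fst p) * fps_X ^ snd p)"

lemma trunc_nth: "trunc N a $ j $ i = (if i + j \<le> N then a $ j $ i else 0)"
proof -
  have "trunc N a $ j $ i = (\<Sum>p\<in>D N. if p = (i, j) then a $ j $ i else 0)"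
    unfolding trunc_def fps_sum_nth
    by (rule sum.cong[OF refl]) (auto simp: fps_X_power_mult_right_nth)
  also have "\<dots> = (if (i, j) \<in> D N then a $ j $ i else 0)"
    by (rule sum.delta[OF finite_D])
  also have "\<dots> = (if i + j \<le> N then a $ j $ i else 0)"
    by (simp add: D_def)
  finally show ?thesis .
qed

lemma \<iota>_trunc: "\<iota> (trunc N a) = (\<Sum>p\<in>D N. \<kappa> (a $ snd p $ fst p) * \<iota> (fps_const fps_X) ^ fst p * \<iota> fps_X ^ snd p)"
  unfolding trunc_def \<iota>_sum
  by (rule sum.cong[OF refl]) (simp add: \<kappa>_def flip: fps_const_mult fps_const_power)

lemma \<iota>_trunc_alg: "\<iota> (trunc N a) \<in> alg (\<iota> (fps_const fps_X)) (\<iota> fps_X)"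
  unfolding \<iota>_trunc by (intro alg_sum alg_mult alg_power alg_const alg_g1 alg_g2) simp

lemma trunc_vge: "vge w (\<iota> a - \<iota> (trunc N a)) (int (N + 1))"
proof -
  have "vR (a - trunc N a) (int (N + 1))"
    by (rule vR_ord) (simp add: trunc_nth)
  then show ?thesis using vR_vge by fastforce
qed

end

context setting begin

definition evL :: "'k poly \<Rightarrow> 'L \<Rightarrow> 'L" where
  "evL p u = (\<Sum>i\<le>degree p. \<kappa> (coeff p i) * u ^ i)"

lemma evL_bound:
  assumes "degree p < N"
  shows "evL p u = (\<Sum>i<N. \<kappa> (coeff p i) * u ^ i)"
proof -
  have "(\<Sum>i<N. \<kappa> (coeff p i) * u ^ i) = (\<Sum>i\<in>{..degree p}. \<kappa> (coeff p i) * u ^ i)"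
    by (rule sum.mono_neutral_right) (use assms in \<open>auto simp: coeff_eq_0\<close>)
  then show ?thesis by (simp add: evL_def)
qed

lemma evL_add: "evL (p + q) u = evL p u + evL q u"
proof -
  define N where "N = Suc (max (degree p) (degree q))"
  have "degree (p + q) < N" using degree_add_le_max[of p q] by (simp add: N_def le_imp_less_Suc)
  then show ?thesis
    by (simp add: evL_bound[of _ N] N_def \<kappa>_add algebra_simps sum.distrib less_Suc_eq_le)
qed

lemma evL_smult: "evL (smult c p) u = \<kappa> c * evL p u"
proof -
  define N where "N = Suc (degree p)"
  have "degree (smult c p) < N" using degree_smult_le[of c p] by (simp add: N_def)
  then show ?thesis
    by (simp add: evL_bound[of _ N] N_def \<kappa>_mult algebra_simps sum_distrib_left)
qed

lemma evL_pCons0: "evL (pCons 0 p) u = u * evL p u"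
proof -
  define N where "N = Suc (Suc (degree p))"
  have d: "degree (pCons 0 p) < N" by (simp add: N_def degree_pCons_le le_imp_less_Suc)
  have "evL (pCons 0 p) u = (\<Sum>i<Suc (Suc (degree p)). \<kappa> (coeff (pCons 0 p) i) * u ^ i)"
    using evL_bound[OF d] by (simp add: N_def)
  also have "\<dots> = (\<Sum>i<Suc (degree p). \<kappa> (coeff p i) * u ^ Suc i)"
    by (subst sum.lessThan_Suc_shift) simp
  also have "\<dots> = u * evL p u"
    by (simp add: evL_bound[of p "Suc (degree p)"] sum_distrib_left algebra_simps)
  finally show ?thesis .
qed

lemma evL_const: "evL [:c:] u = \<kappa> c"
  by (simp add: evL_def)

lemma evL_linear: "evL ([:- c, 1:] * q) u = (u - \<kappa> c) * evL q u"
proof -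
  have eq: "[:- c, 1:] * q = smult (- c) q + pCons 0 q" by simp
  show ?thesis unfolding eq evL_add evL_smult evL_pCons0 by (simp add: \<kappa>_uminus algebra_simps)
qed

lemma alg_root: "0 < degree (p :: 'k poly) \<Longrightarrow> \<exists>x. poly p x = 0"
  using ac unfolding alg_closed_type_def by blast

lemma evL_nonzero:
  assumes u: "\<And>c. u - \<kappa> c \<noteq> 0 \<and> w (u - \<kappa> c) = 0"
  shows "p \<noteq> 0 \<Longrightarrow> evL p u \<noteq> 0 \<and> w (evL p u) = 0"
proof (induction "degree p" arbitrary: p rule: less_induct)
  case less
  show ?case
  proof (cases "degree p = 0")
    case True
    then obtain c where p: "p = [:c:]" by (metis degree_eq_zeroE)
    then have "c \<noteq> 0" using less.prems by simp
    then show ?thesis by (simp add: p evL_const \<kappa>_nz w_\<kappa>)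
  next
    case False
    then obtain x where "poly p x = 0" using alg_root by blast
    then obtain q where pq: "p = [:- x, 1:] * q" using poly_eq_0_iff_dvd by (metis dvdE)
    have q0: "q \<noteq> 0" using less.prems pq by auto
    have "degree ([:- x, 1:] * q) = degree [:- x, 1:] + degree q" by (rule degree_mult_eq) (use q0 in simp_all)
    then have "degree p = 1 + degree q" using pq by simp
    then have "degree q < degree p" by simp
    then have IH: "evL q u \<noteq> 0 \<and> w (evL q u) = 0" using less.hyps q0 by blast
    show ?thesis unfolding pq evL_linear using IH u[of x] by (simp add: w_mult)
  qed
qed

lemma nonzero_coeff: "f \<noteq> 0 \<Longrightarrow> \<exists>i j. f $ j $ i \<noteq> 0"
  by (metis fps_ext fps_zero_nth)

lemma ord2_ex: "f \<noteq> 0 \<Longrightarrow> \<exists>i j. i + j = ord2 f \<and> f $ j $ i \<noteq> 0"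
proof -
  assume "f \<noteq> 0"
  then obtain i j where "f $ j $ i \<noteq> 0" using nonzero_coeff by blast
  then have "\<exists>d i j. i + j = d \<and> f $ j $ i \<noteq> 0" by blast
  then show ?thesis unfolding ord2_def by (rule LeastI_ex)
qed

lemma ord2_below: "i + j < ord2 f \<Longrightarrow> f $ j $ i = 0"
  unfolding ord2_def using not_less_Least by blast

lemma ord2_le: "f $ j $ i \<noteq> 0 \<Longrightarrow> ord2 f \<le> i + j"
  unfolding ord2_def by (rule Least_le) blast

lemma ord2_geI: "(\<And>i j. i + j < N \<Longrightarrow> f $ j $ i = 0) \<Longrightarrow> f \<noteq> 0 \<Longrightarrow> N \<le> ord2 f"
  using ord2_ex[of f] by (metis not_le)

definition final :: "'L \<Rightarrow> 'L \<Rightarrow> bool" where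
  "final Y1 Y2 \<longleftrightarrow> Y1 \<noteq> 0 \<and> Y2 \<noteq> 0 \<and> 1 \<le> w Y1 \<and> w Y1 = w Y2 \<and>
     (\<forall>c. c \<noteq> 0 \<longrightarrow> Y2 - \<kappa> c * Y1 \<noteq> 0 \<and> w (Y2 - \<kappa> c * Y1) = w Y1)"

lemma final_ok: "final Y1 Y2 \<Longrightarrow> ok Y1 Y2 (w Y1)"
  by (simp add: final_def ok_def vge_def)

lemma hom_part:
  assumes fin: "final Y1 Y2" and f0: "f \<noteq> 0"
  shows "psum Y1 Y2 f (ord2 f) \<noteq> 0 \<and> w (psum Y1 Y2 f (ord2 f)) = w Y1 * int (ord2 f)"
proof -
  define d where "d = ord2 f"
  define m where "m = w Y1"
  have Y1: "Y1 \<noteq> 0" and Y2: "Y2 \<noteq> 0" and wY2: "w Y2 = m" using fin by (auto simp: final_def m_def)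
  define u where "u = Y2 / Y1"
  have u: "u - \<kappa> c \<noteq> 0 \<and> w (u - \<kappa> c) = 0" for c
  proof (cases "c = 0")
    case True
    then show ?thesis using Y1 Y2 wY2 by (simp add: u_def w_div m_def)
  next
    case False
    have e: "u - \<kappa> c = (Y2 - \<kappa> c * Y1) / Y1" using Y1 by (simp add: u_def field_simps)
    show ?thesis using fin False Y1 unfolding e by (simp add: final_def w_div)
  qed
  define p where "p = (\<Sum>j\<le>d. monom (f $ j $ (d - j)) j)"
  have cp: "coeff p j = (if j \<le> d then f $ j $ (d - j) else 0)" for j
  proof -
    have "coeff p j = (\<Sum>i\<le>d. if i = j then f $ i $ (d - i) else 0)"
      by (simp add: p_def coeff_sum coeff_monom)
    also have "\<dots> = (if j \<le> d then f $ j $ (d - j) else 0)"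
      by (subst sum.delta[OF finite_atMost]) simp
    finally show ?thesis .
  qed
  have degp: "degree p < Suc d" by (simp add: degree_le cp le_imp_less_Suc)
  obtain i0 j0 where ij0: "i0 + j0 = d" "f $ j0 $ i0 \<noteq> 0" using ord2_ex[OF f0] d_def by blast
  have "coeff p j0 \<noteq> 0" using ij0 cp[of j0] by (simp add: diff_add_inverse2[symmetric] ij0(1)[symmetric])
  then have p0: "p \<noteq> 0" by auto
  have ev: "evL p u \<noteq> 0 \<and> w (evL p u) = 0" by (rule evL_nonzero[OF u p0])
  have "psum Y1 Y2 f d = (\<Sum>q\<in>(\<lambda>j. (d - j, j)) ` {..d}. mon Y1 Y2 f q)"
    unfolding psum_def
  proof (rule sum.mono_neutral_right)
    show "(\<lambda>j. (d - j, j)) ` {..d} \<subseteq> D d" by (auto simp: D_def)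
  next
    show "\<forall>q\<in>D d - (\<lambda>j. (d - j, j)) ` {..d}. mon Y1 Y2 f q = 0"
    proof
      fix q assume q: "q \<in> D d - (\<lambda>j. (d - j, j)) ` {..d}"
      obtain a b where qab: "q = (a, b)" by fastforce
      have le: "a + b \<le> d" using q qab by (simp add: D_def)
      have "a + b \<noteq> d"
      proof
        assume "a + b = d"
        then have "q = (\<lambda>j. (d - j, j)) b" "b \<in> {..d}" using qab by auto
        then show False using q by blast
      qed
      then have "fst q + snd q < d" using le qab by simp
      then show "mon Y1 Y2 f q = 0" by (intro mon_zero ord2_below) (simp add: d_def)
    qed
  qed simp
  also have "\<dots> = (\<Sum>j\<le>d. mon Y1 Y2 f (d - j, j))"
    by (subst sum.reindex) (auto simp: inj_on_def)
  also have "\<dots> = (\<Sum>j\<le>d. Y1 ^ d * (\<kappa> (coeff p j) * u ^ j))"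
  proof (rule sum.cong[OF refl])
    fix j assume "j \<in> {..d}"
    then have jd: "j \<le> d" by simp
    have "Y1 ^ d = Y1 ^ (d - j) * Y1 ^ j" using jd by (simp flip: power_add)
    then show "mon Y1 Y2 f (d - j, j) = Y1 ^ d * (\<kappa> (coeff p j) * u ^ j)"
      using jd Y1 by (simp add: mon_def cp u_def power_divide field_simps)
  qed
  also have "\<dots> = Y1 ^ d * evL p u"
    by (simp add: sum_distrib_left evL_bound[OF degp] lessThan_Suc_atMost)
  finally have ps: "psum Y1 Y2 f d = Y1 ^ d * evL p u" .
  show ?thesis using ps ev Y1 by (simp add: d_def[symmetric] w_mult w_power m_def)
qed

lemma final_exact:
  assumes fin: "final Y1 Y2" and f0: "f \<noteq> 0"
  shows "ev Y1 Y2 f \<noteq> 0 \<and> w (ev Y1 Y2 f) = w Y1 * int (ord2 f)"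
proof -
  define m where "m = w Y1"
  have ok: "ok Y1 Y2 m" using final_ok[OF fin] by (simp add: m_def)
  have m1: "1 \<le> m" using ok by (simp add: ok_def)
  let ?P = "psum Y1 Y2 f (ord2 f)"
  have hp: "?P \<noteq> 0 \<and> w ?P = m * int (ord2 f)" using hom_part[OF fin f0] by (simp add: m_def)
  have "vge w (ev Y1 Y2 f - ?P) (m * int (ord2 f + 1))" by (rule ev_approx[OF ok])
  then have "vge w (ev Y1 Y2 f - ?P) (w ?P + 1)"
    by (rule vge_mono) (use hp m1 in \<open>simp add: algebra_simps\<close>)
  from w_strict[OF conjunct1[OF hp] this] show ?thesis using hp by (simp add: m_def)
qed

lemma closure_ev:
  assumes ok: "ok Y1 Y2 m"
    and ex: "\<And>f. f \<noteq> 0 \<Longrightarrow> ev Y1 Y2 f \<noteq> 0 \<and> w (ev Y1 Y2 f) = m * int (ord2 f)"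
    and z: "\<And>N. \<exists>f. vge w (z - ev Y1 Y2 f) N"
  shows "\<exists>f. z = ev Y1 Y2 f"
proof -
  have m1: "1 \<le> m" using ok by (simp add: ok_def)
  have "\<forall>N. \<exists>f. vge w (z - ev Y1 Y2 f) (m * int N)" using z by blast
  from choice[OF this] obtain F where F: "\<And>N. vge w (z - ev Y1 Y2 (F N)) (m * int N)"
    by blast
  have agree: "F N $ j $ i = F M $ j $ i" if "N \<le> M" "i + j < N" for N M i j
  proof (rule ccontr)
    assume ne: "F N $ j $ i \<noteq> F M $ j $ i"
    let ?g = "F N - F M"
    have g0: "?g \<noteq> 0" using ne by (metis diff_eq_eq fps_add_nth fps_zero_nth add_0)
    have "vge w (z - ev Y1 Y2 (F M)) (m * int N)"
      using F[of M] that(1) m1 by (elim vge_mono) (simp add: mult_left_mono)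
    then have "vge w ((z - ev Y1 Y2 (F M)) - (z - ev Y1 Y2 (F N))) (m * int N)"
      using F[of N] by (rule vge_diff)
    then have "vge w (ev Y1 Y2 ?g) (m * int N)" by (simp add: ev_diff[OF ok])
    then have "m * int N \<le> m * int (ord2 ?g)" using ex[OF g0] by (simp add: vge_def)
    then have "N \<le> ord2 ?g" using m1 by simp
    moreover have "ord2 ?g \<le> i + j" by (rule ord2_le) (use ne in simp)
    ultimately show False using that(2) by simp
  qed
  define f where "f = Abs_fps (\<lambda>j. Abs_fps (\<lambda>i. F (i + j + 1) $ j $ i))"
  have "vge w (z - ev Y1 Y2 f) (int N)" for N
  proof -
    have c: "vge w (ev Y1 Y2 (f - F N)) (m * int N)"
      by (rule ev_cont[OF ok]) (simp add: f_def agree)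
    have "vge w ((z - ev Y1 Y2 (F N)) - ev Y1 Y2 (f - F N)) (m * int N)"
      by (rule vge_diff[OF F c])
    then have "vge w (z - ev Y1 Y2 f) (m * int N)" by (simp add: ev_diff[OF ok])
    then show ?thesis using m1 by (elim vge_mono) (simp add: mult_le_cancel_right1)
  qed
  then have "z = ev Y1 Y2 f"
  proof (intro vge_all_eq)
    fix N :: int
    assume h: "\<And>N. vge w (z - ev Y1 Y2 f) (int N)"
    show "vge w (z - ev Y1 Y2 f) N" using h[of "nat N"] by (rule vge_mono) simp
  qed
  then show ?thesis by blast
qed

end

lemma dep_lemma:
  fixes \<sigma> :: "'a::idom \<Rightarrow> 'b::comm_ring_1" and g :: "nat \<Rightarrow> 'b"
  assumes \<sigma>_add: "\<And>a b. \<sigma> (a + b) = \<sigma> a + \<sigma> b"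
    and \<sigma>_mult: "\<And>a b. \<sigma> (a * b) = \<sigma> a * \<sigma> b"
  shows "(\<And>i. i \<le> n \<Longrightarrow> y i = (\<Sum>r<n. \<sigma> (A i r) * g r)) \<Longrightarrow>
         \<exists>c. (\<exists>i\<le>n. c i \<noteq> 0) \<and> (\<Sum>i\<le>n. \<sigma> (c i) * y i) = 0"
proof (induction n arbitrary: A y)
  case 0
  then have "y 0 = 0" by simp
  then show ?case by (intro exI[of _ "\<lambda>_. 1"]) auto
next
  case (Suc n)
  have \<sigma>0: "\<sigma> 0 = 0" using \<sigma>_add[of 0 0] by simp
  have \<sigma>_uminus: "\<sigma> (- a) = - \<sigma> a" for a
    using \<sigma>_add[of a "- a"] \<sigma>0 by (simp add: eq_neg_iff_add_eq_0 add.commute)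
  have \<sigma>_sum: "\<sigma> (sum f B) = (\<Sum>x\<in>B. \<sigma> (f x))" for f and B :: "nat set"
    by (induction B rule: infinite_finite_induct) (simp_all add: \<sigma>0 \<sigma>_add)
  have \<sigma>_diff: "\<sigma> (a - b) = \<sigma> a - \<sigma> b" for a b
    using \<sigma>_add[of a "- b"] \<sigma>_uminus[of b] by simp
  show ?case
  proof (cases "\<forall>i\<le>Suc n. A i n = 0")
    case True
    have "y i = (\<Sum>r<n. \<sigma> (A i r) * g r)" if "i \<le> n" for i
      using Suc.prems[of i] True that by (simp add: \<sigma>0)
    then obtain c where c: "\<exists>i\<le>n. c i \<noteq> 0" "(\<Sum>i\<le>n. \<sigma> (c i) * y i) = 0"
      using Suc.IH by blast
    show ?thesis
    proof (intro exI[of _ "c(Suc n := 0)"] conjI)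
      show "\<exists>i\<le>Suc n. (c(Suc n := 0)) i \<noteq> 0" using c(1) by (metis fun_upd_other le_SucI not_less_eq_eq)
      have "(\<Sum>i\<le>Suc n. \<sigma> ((c(Suc n := 0)) i) * y i) = (\<Sum>i\<le>n. \<sigma> (c i) * y i)"
        by (simp add: \<sigma>0)
      then show "(\<Sum>i\<le>Suc n. \<sigma> ((c(Suc n := 0)) i) * y i) = 0" using c(2) by simp
    qed
  next
    case False
    then obtain p where p: "p \<le> Suc n" "A p n \<noteq> 0" by blast
    define idx where "idx i = (if i < p then i else Suc i)" for i
    define inv where "inv j = (if j < p then j else j - 1)" for j
    define y' where "y' i = \<sigma> (A p n) * y (idx i) - \<sigma> (A (idx i) n) * y p" for i
    define A' where "A' i r = A p n * A (idx i) r - A (idx i) n * A p r" for i r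
    have idx_le: "idx i \<le> Suc n" if "i \<le> n" for i using that by (simp add: idx_def)
    have "y' i = (\<Sum>r<n. \<sigma> (A' i r) * g r)" if "i \<le> n" for i
    proof -
      let ?a = "\<sigma> (A p n)" and ?b = "\<sigma> (A (idx i) n)"
      have "y' i = ?a * (\<Sum>r<Suc n. \<sigma> (A (idx i) r) * g r) - ?b * (\<Sum>r<Suc n. \<sigma> (A p r) * g r)"
        unfolding y'_def using Suc.prems[OF idx_le[OF that]] Suc.prems[OF p(1)] by simp
      also have "\<dots> = ?a * (\<Sum>r<n. \<sigma> (A (idx i) r) * g r) - ?b * (\<Sum>r<n. \<sigma> (A p r) * g r)"
        by (simp only: sum.lessThan_Suc distrib_left) (simp add: mult_ac)
      also have "\<dots> = (\<Sum>r<n. (?a * \<sigma> (A (idx i) r) - ?b * \<sigma> (A p r)) * g r)"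
        by (simp only: sum_distrib_left left_diff_distrib sum_subtractf mult.assoc)
      also have "\<dots> = (\<Sum>r<n. \<sigma> (A' i r) * g r)"
        by (simp add: A'_def \<sigma>_mult \<sigma>_diff)
      finally show ?thesis .
    qed
    then obtain c' where c': "\<exists>i\<le>n. c' i \<noteq> 0" "(\<Sum>i\<le>n. \<sigma> (c' i) * y' i) = 0"
      using Suc.IH by blast
    define c where "c j = (if j = p then - (\<Sum>i\<le>n. c' i * A (idx i) n) else A p n * c' (inv j))" for j
    have img: "{..Suc n} - {p} = idx ` {..n}"
    proof (intro equalityI subsetI)
      fix j assume j: "j \<in> {..Suc n} - {p}"
      then have "inv j \<in> {..n}" "idx (inv j) = j" using p(1) by (auto simp: inv_def idx_def)
      then show "j \<in> idx ` {..n}" by (metis imageI)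
    next
      fix j assume "j \<in> idx ` {..n}"
      then show "j \<in> {..Suc n} - {p}" using p(1) by (auto simp: idx_def)
    qed
    have inj: "inj_on idx {..n}" by (auto simp: inj_on_def idx_def split: if_splits)
    have inv_idx: "inv (idx i) = i" for i by (simp add: inv_def idx_def)
    have idx_ne: "idx i \<noteq> p" for i by (simp add: idx_def)
    have s1: "(\<Sum>j\<le>Suc n. \<sigma> (c j) * y j) = \<sigma> (c p) * y p + (\<Sum>j\<in>{..Suc n} - {p}. \<sigma> (c j) * y j)"
      by (rule sum.remove) (use p(1) in auto)
    have s2: "(\<Sum>j\<in>{..Suc n} - {p}. \<sigma> (c j) * y j) = (\<Sum>i\<le>n. \<sigma> (c (idx i)) * y (idx i))"
      unfolding img by (subst sum.reindex[OF inj]) simp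
    have s3: "(\<Sum>i\<le>n. \<sigma> (c (idx i)) * y (idx i)) = (\<Sum>i\<le>n. \<sigma> (c' i) * (\<sigma> (A p n) * y (idx i)))"
      by (rule sum.cong[OF refl]) (simp add: c_def idx_ne inv_idx \<sigma>_mult mult_ac)
    have s4: "\<sigma> (c p) * y p = - (\<Sum>i\<le>n. \<sigma> (c' i) * (\<sigma> (A (idx i) n) * y p))"
      by (simp add: c_def \<sigma>_uminus \<sigma>_sum \<sigma>_mult sum_distrib_right sum_distrib_left mult_ac)
    have s5: "(\<Sum>i\<le>n. \<sigma> (c' i) * y' i) = (\<Sum>i\<le>n. \<sigma> (c' i) * (\<sigma> (A p n) * y (idx i))) - (\<Sum>i\<le>n. \<sigma> (c' i) * (\<sigma> (A (idx i) n) * y p))"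
      by (simp only: y'_def right_diff_distrib sum_subtractf)
    have sum0: "(\<Sum>j\<le>Suc n. \<sigma> (c j) * y j) = 0"
      using s1 s2 s3 s4 s5 c'(2) by simp
    obtain i0 where i0: "i0 \<le> n" "c' i0 \<noteq> 0" using c'(1) by blast
    have "c (idx i0) \<noteq> 0" using i0 p(2) by (simp add: c_def idx_ne inv_idx)
    then show ?thesis using sum0 idx_le[OF i0(1)] by blast
  qed
qed

lemma comp_Xpow_nth:
  assumes "0 < a"
  shows "(c oo fps_X ^ a) $ m = (if a dvd m then c $ (m div a) else (0 :: 'k :: field))"
proof -
  have "(c oo fps_X ^ a) $ m = (\<Sum>i=0..m. c $ i * (if m = a * i then 1 else 0))"
    by (simp add: fps_compose_nth power_mult[symmetric])
  also have "\<dots> = (\<Sum>i=0..m. if i = m div a then (if a dvd m then c $ i else 0) else 0)"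
    by (rule sum.cong[OF refl]) (use assms in auto)
  also have "\<dots> = (if a dvd m then c $ (m div a) else 0)"
    by (subst sum.delta) (auto simp: div_le_dividend)
  finally show ?thesis .
qed

definition dec :: "nat \<Rightarrow> 'k fps \<Rightarrow> nat \<Rightarrow> 'k fps" where
  "dec a h r = Abs_fps (\<lambda>n. h $ (a * n + r))"

lemma decomp:
  assumes a: "0 < a"
  shows "h = (\<Sum>r<a. (dec a h r oo fps_X ^ a) * fps_X ^ r :: 'k :: field fps)"
proof (rule fps_ext)
  fix m
  have t: "((dec a h r oo fps_X ^ a) * fps_X ^ r) $ m = (if r = m mod a then h $ m else 0)" if r: "r < a" for r
  proof (cases "r = m mod a")
    case True
    have le: "r \<le> m" using True by simp
    have e: "m - r = a * (m div a)" using True by (simp add: minus_mod_eq_mult_div)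
    have "((dec a h r oo fps_X ^ a) * fps_X ^ r) $ m = (dec a h r oo fps_X ^ a) $ (m - r)"
      using le by (simp add: fps_X_power_mult_right_nth)
    also have "\<dots> = dec a h r $ (m div a)"
      using e a by (simp add: comp_Xpow_nth)
    also have "\<dots> = h $ (a * (m div a) + r)" by (simp add: dec_def)
    also have "a * (m div a) + r = m" using e le by simp
    finally show ?thesis using True by simp
  next
    case False
    have "\<not> (r \<le> m \<and> a dvd (m - r))"
    proof
      assume h: "r \<le> m \<and> a dvd (m - r)"
      then obtain k where "m - r = a * k" by blast
      then have "m = a * k + r" using h by simp
      then have "m mod a = r" using r by simp
      then show False using False by simp
    qed
    then show ?thesis using False a
      by (auto simp: fps_X_power_mult_right_nth comp_Xpow_nth not_less)
  qed
  have "(\<Sum>r<a. (dec a h r oo fps_X ^ a) * fps_X ^ r) $ m = (\<Sum>r<a. if r = m mod a then h $ m else 0)"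
    unfolding fps_sum_nth by (rule sum.cong[OF refl]) (simp add: t)
  also have "\<dots> = h $ m" using a by (subst sum.delta) auto
  finally show "h $ m = (\<Sum>r<a. (dec a h r oo fps_X ^ a) * fps_X ^ r) $ m" by simp
qed

lemma compose_sum: "(sum f A) oo b = (\<Sum>i\<in>A. f i oo b)"
  by (induction A rule: infinite_finite_induct) (simp_all add: fps_compose_add_distrib)

lemma fps_dep:
  fixes G1 G2 :: "'k::field_char_0 fps"
  assumes ac: "alg_closed_type TYPE('k)" and G10: "G1 $ 0 = 0" and G1nz: "G1 \<noteq> 0"
  shows "\<exists>c. (\<exists>j\<le>subdegree G1. c j \<noteq> 0) \<and> (\<Sum>j\<le>subdegree G1. (c j oo G1) * G2 ^ j) = 0"
proof -
  define a where "a = subdegree G1"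
  have a0: "0 < a" using G10 G1nz subdegree_eq_0_iff[of G1] by (simp add: a_def)
  then obtain k where ak: "a = Suc k" using gr0_implies_Suc by blast
  define u where "u = fps_shift a G1"
  have u0: "u $ 0 \<noteq> 0" using G1nz by (simp add: u_def a_def)
  have G1u: "G1 = u * fps_X ^ a" unfolding u_def a_def by (rule subdegree_decompose)
  define P where "P = monom (1::'k) a + [:- (u $ 0):]"
  have "degree P = a"
  proof -
    have "degree [:- (u $ 0):] < degree (monom (1::'k) a)" using a0 by (simp add: degree_monom_eq)
    then have "degree (monom (1::'k) a + [:- (u $ 0):]) = degree (monom (1::'k) a)"
      by (rule degree_add_eq_left)
    then show ?thesis by (simp only: P_def degree_monom_eq) (simp add: degree_monom_eq)
  qed
  then obtain r0 where "poly P r0 = 0" using ac a0 unfolding alg_closed_type_def by auto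
  then have r0: "r0 ^ a = u $ 0" by (simp add: P_def poly_monom)
  define \<rho> where "\<rho> = fps_radical (\<lambda>_ _. r0) a u"
  have \<rho>pow: "\<rho> ^ a = u"
    using power_radical[of u "\<lambda>_ _. r0" k] u0 r0 by (simp add: \<rho>_def ak)
  have \<rho>0: "\<rho> $ 0 = r0" using a0 by (simp add: \<rho>_def)
  have r0nz: "r0 \<noteq> 0" using r0 u0 a0 by (metis zero_power)
  define S where "S = fps_X * \<rho>"
  have S0: "S $ 0 = 0" and S1: "S $ 1 \<noteq> 0" using \<rho>0 r0nz by (simp_all add: S_def)
  have Spow: "S ^ a = G1" by (simp add: S_def power_mult_distrib \<rho>pow G1u mult.commute)
  define T where "T = fps_inv S"
  have T0: "T $ 0 = 0" by (simp add: T_def fps_inv_def)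
  have ST: "S oo T = fps_X" unfolding T_def by (rule fps_inv_right[OF S0 S1])
  have TS: "T oo S = fps_X" unfolding T_def by (rule fps_inv[OF S0 S1])
  define H2 where "H2 = G2 oo T"
  define \<sigma> where "\<sigma> c = c oo (fps_X ^ a :: 'k fps)" for c
  have Xa0: "(fps_X ^ a :: 'k fps) $ 0 = 0" using a0 by simp
  have \<sigma>_add: "\<sigma> (x + y) = \<sigma> x + \<sigma> y" for x y by (simp add: \<sigma>_def fps_compose_add_distrib)
  have \<sigma>_mult: "\<sigma> (x * y) = \<sigma> x * \<sigma> y" for x y by (simp add: \<sigma>_def fps_compose_mult_distrib[OF Xa0])
  have "\<exists>c. (\<exists>i\<le>a. c i \<noteq> 0) \<and> (\<Sum>i\<le>a. \<sigma> (c i) * H2 ^ i) = 0"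
    by (rule dep_lemma[of \<sigma> a "\<lambda>i. H2 ^ i" "\<lambda>i r. dec a (H2 ^ i) r" "\<lambda>r. fps_X ^ r", OF \<sigma>_add \<sigma>_mult])
       (simp add: \<sigma>_def decomp[OF a0, symmetric])
  then obtain c where c: "\<exists>i\<le>a. c i \<noteq> 0" "(\<Sum>i\<le>a. \<sigma> (c i) * H2 ^ i) = 0" by blast
  have XaS: "fps_X ^ a oo S = G1"
    using fps_compose_power[OF S0, of fps_X a] by (simp add: S0 Spow)
  have c1: "\<sigma> (c i) oo S = c i oo G1" for i
    unfolding \<sigma>_def using fps_compose_assoc[OF S0 Xa0, of "c i"] XaS by simp
  have c2: "H2 oo S = G2"
    unfolding H2_def using fps_compose_assoc[OF S0 T0, of G2] TS by simp
  have "0 = (\<Sum>i\<le>a. \<sigma> (c i) * H2 ^ i) oo S" using c(2) by simp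
  also have "\<dots> = (\<Sum>i\<le>a. (c i oo G1) * G2 ^ i)"
    unfolding compose_sum
    by (rule sum.cong[OF refl]) (simp add: fps_compose_mult_distrib[OF S0] fps_compose_power[OF S0, symmetric] c1 c2)
  finally show ?thesis using c(1) by (auto simp: a_def)
qed

context setting begin

lemma psum_const: "psum Y1 Y2 (fps_const G) n = (\<Sum>i\<le>n. \<kappa> (G $ i) * Y1 ^ i)"
proof -
  have "psum Y1 Y2 (fps_const G) n = (\<Sum>q\<in>(\<lambda>i. (i, 0)) ` {..n}. mon Y1 Y2 (fps_const G) q)"
    unfolding psum_def
  proof (rule sum.mono_neutral_right)
    show "(\<lambda>i. (i, 0::nat)) ` {..n} \<subseteq> D n" by (auto simp: D_def)
  next
    show "\<forall>q\<in>D n - (\<lambda>i. (i, 0)) ` {..n}. mon Y1 Y2 (fps_const G) q = 0"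
    proof
      fix q assume q: "q \<in> D n - (\<lambda>i. (i, 0)) ` {..n}"
      obtain a b where qab: "q = (a, b)" by fastforce
      have "b \<noteq> 0"
      proof
        assume "b = 0"
        then have "q = (\<lambda>i. (i, 0)) a" "a \<in> {..n}" using qab q by (auto simp: D_def)
        then show False using q by blast
      qed
      then show "mon Y1 Y2 (fps_const G) q = 0" using qab by (intro mon_zero) simp
    qed
  qed simp
  also have "\<dots> = (\<Sum>i\<le>n. mon Y1 Y2 (fps_const G) (i, 0))"
    by (subst sum.reindex) (auto simp: inj_on_def)
  also have "\<dots> = (\<Sum>i\<le>n. \<kappa> (G $ i) * Y1 ^ i)" by (simp add: mon_def)
  finally show ?thesis .
qed

lemma fps_const_sum: "fps_const (sum f A) = (\<Sum>x\<in>A. fps_const (f x))"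
  by (induction A rule: infinite_finite_induct) (simp_all flip: fps_const_add)

lemma power_nth_below: "(G :: 'k fps) $ 0 = 0 \<Longrightarrow> k < i \<Longrightarrow> (G ^ i) $ k = 0"
proof -
  assume G0: "G $ 0 = 0" and ki: "k < i"
  have "G = fps_X * fps_shift 1 G"
    by (rule fps_ext) (simp add: G0)
  then have "G ^ i = fps_X ^ i * fps_shift 1 G ^ i" by (metis power_mult_distrib)
  then show ?thesis using ki by (simp add: fps_X_power_mult_nth)
qed

lemma no_arc:
  assumes t: "t \<noteq> 0" "w t = m" "1 \<le> m"
    and g1: "\<iota> (fps_const fps_X) = ev t 0 (fps_const G1)"
    and g2: "\<iota> fps_X = ev t 0 (fps_const G2)"
  shows False
proof -
  have ok: "ok t 0 m" using t by (simp add: ok_def vge_def)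
  define E where "E G = ev t 0 (fps_const G)" for G
  have E_add: "E (x + y) = E x + E y" for x y by (simp add: E_def ev_add[OF ok] flip: fps_const_add)
  have E_mult: "E (x * y) = E x * E y" for x y by (simp add: E_def ev_mult[OF ok] flip: fps_const_mult)
  have E_diff: "E (x - y) = E x - E y" for x y by (simp add: E_def ev_diff[OF ok] flip: fps_const_sub)
  have E_const: "E (fps_const c) = \<kappa> c" for c by (simp add: E_def ev_const[OF ok])
  have E_power: "E (x ^ n) = E x ^ n" for x n by (simp add: E_def ev_power[OF ok] flip: fps_const_power)
  have E_sum: "E (sum f A) = (\<Sum>i\<in>A. E (f i))" for f and A :: "nat set"
    by (simp add: E_def fps_const_sum ev_sum[OF ok])
  have E_0: "E 0 = 0" using ev_0[OF ok] by (simp add: E_def)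
  have vX1: "1 \<le> w (\<iota> (fps_const fps_X))" and nzX1: "\<iota> (fps_const fps_X) \<noteq> 0"
  proof -
    have ne: "(fps_const fps_X :: 'k fps fps) \<noteq> 0" using vX1 by (metis fps_X_neq_zero fps_const_eq_0_iff)
    then show "\<iota> (fps_const fps_X) \<noteq> 0" by (simp add: \<iota>_eq0)
    show "1 \<le> w (\<iota> (fps_const fps_X))" using vX1 ne by (simp add: vR_def w_\<iota>)
  qed
  have G10: "G1 $ 0 = 0"
  proof (rule ccontr)
    assume c0: "G1 $ 0 \<noteq> 0"
    have split: "G1 = fps_const (G1 $ 0) + (G1 - fps_const (G1 $ 0))" by simp
    have "vge w (E (G1 - fps_const (G1 $ 0))) (m * int 1)"
      unfolding E_def by (rule ev_cont[OF ok]) auto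
    then have "vge w (E (G1 - fps_const (G1 $ 0))) (w (\<kappa> (G1 $ 0)) + 1)"
      using c0 t by (auto simp: w_\<kappa> intro: vge_mono)
    from w_strict[OF \<kappa>_nz[OF c0] this] have "w (E G1) = 0"
      using E_add[of "fps_const (G1 $ 0)" "G1 - fps_const (G1 $ 0)"] by (simp add: E_const w_\<kappa> c0)
    then show False using vX1 g1 by (simp add: E_def)
  qed
  have G1nz: "G1 \<noteq> 0" using nzX1 g1 E_0 by (auto simp: E_def)
  have comp: "\<iota> (fps_const c) = E (c oo G1)" for c
  proof (rule vge_all_eq)
    fix N :: int
    define n where "n = nat N"
    define z where "z = (\<Sum>i\<le>n. \<kappa> (c $ i) * \<iota> (fps_const fps_X) ^ i)"
    define T where "T = (\<Sum>i\<le>n. fps_const (fps_const (c $ i)) * fps_const fps_X ^ i :: 'k fps fps)"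
    have Tz: "\<iota> T = z" unfolding T_def z_def \<iota>_sum \<kappa>_def by (simp only: \<iota>_mult \<iota>_power)
    have Tnth: "T $ j $ i' = (if j = 0 \<and> i' \<le> n then c $ i' else 0)" for j i'
    proof -
      have "T = fps_const (\<Sum>i\<le>n. fps_const (c $ i) * fps_X ^ i)"
        by (simp add: T_def fps_const_sum)
      moreover have "(\<Sum>i\<le>n. fps_const (c $ i) * fps_X ^ i) $ i' = (if i' \<le> n then c $ i' else 0)"
      proof -
        have "(\<Sum>i\<le>n. fps_const (c $ i) * fps_X ^ i) $ i' = (\<Sum>i\<le>n. if i = i' then c $ i else 0)"
          unfolding fps_sum_nth by (rule sum.cong[OF refl]) (auto simp: fps_X_power_mult_right_nth)
        also have "\<dots> = (if i' \<le> n then c $ i' else 0)"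
          by (subst sum.delta[OF finite_atMost]) simp
        finally show ?thesis .
      qed
      ultimately show ?thesis by simp
    qed
    have a: "vge w (\<iota> (fps_const c) - z) (int (n + 1))"
    proof -
      have "vR (fps_const c - T) (int (n + 1))"
        by (rule vR_ord) (auto simp: Tnth)
      then show ?thesis using vR_vge Tz by fastforce
    qed
    define Tc where "Tc = (\<Sum>i\<le>n. fps_const (c $ i) * G1 ^ i)"
    have Ez: "E Tc = z"
    proof -
      have "E G1 = \<iota> (fps_const fps_X)" using g1 by (simp add: E_def)
      then show ?thesis by (simp add: Tc_def z_def E_sum E_mult E_const E_power)
    qed
    have b: "vge w (E (c oo G1) - z) (int (n + 1))"
    proof -
      have "vge w (E ((c oo G1) - Tc)) (m * int (n + 1))"
        unfolding E_def
      proof (rule ev_cont[OF ok])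
        fix i j assume ij: "i + j < n + 1"
        show "fps_const ((c oo G1) - Tc) $ j $ i = 0"
        proof (cases "j = 0")
          case True
          then have i: "i \<le> n" using ij by simp
          have "(c oo G1) $ i = (\<Sum>k=0..i. c $ k * (G1 ^ k) $ i)" by (rule fps_compose_nth)
          also have "\<dots> = (\<Sum>k\<le>n. c $ k * (G1 ^ k) $ i)"
            by (rule sum.mono_neutral_left) (use i power_nth_below[OF G10] in auto)
          also have "\<dots> = Tc $ i" by (simp add: Tc_def fps_sum_nth)
          finally show ?thesis using True by (simp add: fps_sub_nth)
        qed simp
      qed
      then have "vge w (E (c oo G1) - z) (m * int (n + 1))" by (simp add: E_diff Ez)
      then show ?thesis using t by (elim vge_mono) (simp add: mult_le_cancel_right1)
    qed
    have "vge w ((\<iota> (fps_const c) - z) - (E (c oo G1) - z)) (int (n + 1))" by (rule vge_diff[OF a b])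
    then have "vge w (\<iota> (fps_const c) - E (c oo G1)) (int (n + 1))" by simp
    then show "vge w (\<iota> (fps_const c) - E (c oo G1)) N" by (rule vge_mono) (simp add: n_def)
  qed
  obtain cc where cc: "\<exists>j\<le>subdegree G1. cc j \<noteq> 0" "(\<Sum>j\<le>subdegree G1. (cc j oo G1) * G2 ^ j) = 0"
    using fps_dep[OF ac G10 G1nz, of G2] by blast
  define al where "al = subdegree G1"
  define A where "A = (\<Sum>j\<le>al. fps_const (cc j) * fps_X ^ j :: 'k fps fps)"
  have "\<iota> A = (\<Sum>j\<le>al. E (cc j oo G1) * E G2 ^ j)"
    by (simp add: A_def \<iota>_sum comp g2 E_def)
  also have "\<dots> = E (\<Sum>j\<le>al. (cc j oo G1) * G2 ^ j)" by (simp add: E_sum E_mult E_power)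
  also have "\<dots> = 0" using cc(2) E_0 by (simp add: al_def)
  finally have A0: "A = 0" by (simp add: \<iota>_eq0)
  obtain j where j: "j \<le> al" "cc j \<noteq> 0" using cc(1) al_def by blast
  have "A $ j = (\<Sum>j'\<le>al. if j' = j then cc j' else 0)"
    unfolding A_def fps_sum_nth by (rule sum.cong[OF refl]) (auto simp: fps_X_power_mult_right_nth)
  also have "\<dots> = cc j" using j by (subst sum.delta[OF finite_atMost]) simp
  finally show False using A0 j by simp
qed

end

context setting begin

definition reach :: "'L \<times> 'L \<Rightarrow> bool" where
  "reach p \<longleftrightarrow> (transf w)\<^sup>*\<^sup>* (\<iota> (fps_const fps_X), \<iota> fps_X) p"

definition Inv :: "'L \<times> 'L \<Rightarrow> bool" where
  "Inv p \<longleftrightarrow> fst p \<noteq> 0 \<and> snd p \<noteq> 0 \<and> 1 \<le> w (fst p) \<and> 1 \<le> w (snd p) \<and>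
     \<iota> (fps_const fps_X) \<in> alg (fst p) (snd p) \<and> \<iota> fps_X \<in> alg (fst p) (snd p) \<and> reach p"

definition Fin :: "'L \<times> 'L \<Rightarrow> bool" where
  "Fin p \<longleftrightarrow> w (fst p) = w (snd p) \<and>
     (\<forall>c. c \<noteq> 0 \<longrightarrow> snd p - \<kappa> c * fst p \<noteq> 0 \<and> w (snd p - \<kappa> c * fst p) = w (fst p))"

lemma alg_in: "x \<in> alg a b \<Longrightarrow> a \<in> alg a' b' \<Longrightarrow> b \<in> alg a' b' \<Longrightarrow> x \<in> alg a' b'"
  using alg_sub[of "alg a' b'" a b] by (auto intro: alg_const alg_add alg_mult)

lemma Inv_init: "Inv (\<iota> (fps_const fps_X), \<iota> fps_X)"
proof -
  have n1: "(fps_const fps_X :: 'k fps fps) \<noteq> 0" by (metis fps_X_neq_zero fps_const_eq_0_iff)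
  have n2: "(fps_X :: 'k fps fps) \<noteq> 0" by simp
  show ?thesis using vX1 vX2 n1 n2
    by (auto simp: Inv_def reach_def vR_def w_\<iota> \<iota>_eq0 intro: alg_g1 alg_g2)
qed

lemma Inv_mono1:
  assumes I: "Inv (a, b)" and lt: "w a < w b"
  shows "Inv (a, b / a)"
proof -
  have a0: "a \<noteq> 0" and b0: "b \<noteq> 0" using I by (auto simp: Inv_def)
  have "transf w (a, b) (a, b / a)" by (rule transf.monoidal1[OF a0 b0 lt])
  then have r: "reach (a, b / a)" using I by (auto simp: Inv_def reach_def)
  have "b = a * (b / a)" using a0 by simp
  then have "b \<in> alg a (b / a)" by (metis alg_g1 alg_g2 alg_mult)
  then show ?thesis using I r a0 b0 lt
    by (auto simp: Inv_def w_div intro: alg_in alg_g1)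
qed

lemma Inv_mono2:
  assumes I: "Inv (a, b)" and lt: "w b < w a"
  shows "Inv (a / b, b)"
proof -
  have a0: "a \<noteq> 0" and b0: "b \<noteq> 0" using I by (auto simp: Inv_def)
  have "transf w (a, b) (a / b, b)" by (rule transf.monoidal2[OF a0 b0 lt])
  then have r: "reach (a / b, b)" using I by (auto simp: Inv_def reach_def)
  have "a = (a / b) * b" using b0 by simp
  then have "a \<in> alg (a / b) b" by (metis alg_g1 alg_g2 alg_mult)
  then show ?thesis using I r a0 b0 lt
    by (auto simp: Inv_def w_div intro: alg_in alg_g2)
qed

lemma w_lin: "a \<noteq> 0 \<Longrightarrow> b \<noteq> 0 \<Longrightarrow> c \<noteq> 0 \<Longrightarrow> b - \<kappa> c * a \<noteq> 0 \<Longrightarrow>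
   min (w b) (w a) \<le> w (b - \<kappa> c * a)"
  using w_ge_min_diff[of b "\<kappa> c * a"] by (simp add: w_mult \<kappa>_nz w_\<kappa>)

lemma Inv_coord1:
  assumes I: "Inv (a, b)" and c: "c \<noteq> 0" and d: "b - \<kappa> c * a \<noteq> 0"
  shows "Inv (a, b - \<kappa> c * a)"
proof -
  have a0: "a \<noteq> 0" and b0: "b \<noteq> 0" using I by (auto simp: Inv_def)
  have "transf w (a, b) (a, b - \<kappa> c * a)" by (rule transf.coord1) (use c in \<open>simp_all add: \<kappa>_nz w_\<kappa>\<close>)
  then have r: "reach (a, b - \<kappa> c * a)" using I by (auto simp: Inv_def reach_def)
  have "b = (b - \<kappa> c * a) + \<kappa> c * a" by simp
  then have "b \<in> alg a (b - \<kappa> c * a)" by (metis alg_g1 alg_g2 alg_mult alg_add alg_const)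
  moreover have "1 \<le> w (b - \<kappa> c * a)" using w_lin[OF a0 b0 c d] I by (auto simp: Inv_def)
  ultimately show ?thesis using I r d
    by (auto simp: Inv_def intro: alg_in alg_g1)
qed

lemma Inv_coord2:
  assumes I: "Inv (a, b)" and c: "c \<noteq> 0" and d: "a - \<kappa> c * b \<noteq> 0"
  shows "Inv (a - \<kappa> c * b, b)"
proof -
  have a0: "a \<noteq> 0" and b0: "b \<noteq> 0" using I by (auto simp: Inv_def)
  have "transf w (a, b) (a - \<kappa> c * b, b)" by (rule transf.coord2) (use c in \<open>simp_all add: \<kappa>_nz w_\<kappa>\<close>)
  then have r: "reach (a - \<kappa> c * b, b)" using I by (auto simp: Inv_def reach_def)
  have "a = (a - \<kappa> c * b) + \<kappa> c * b" by simp
  then have "a \<in> alg (a - \<kappa> c * b) b" by (metis alg_g1 alg_g2 alg_mult alg_add alg_const)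
  moreover have "1 \<le> w (a - \<kappa> c * b)" using w_lin[OF b0 a0 c d] I by (auto simp: Inv_def)
  ultimately show ?thesis using I r d
    by (auto simp: Inv_def intro: alg_in alg_g2)
qed

lemma Fin_swap:
  assumes F: "Fin (a, b)" and a0: "a \<noteq> 0" and b0: "b \<noteq> 0"
  shows "Fin (b, a)"
proof -
  have "a - \<kappa> c * b \<noteq> 0 \<and> w (a - \<kappa> c * b) = w b" if c: "c \<noteq> 0" for c
  proof -
    have ci: "inverse c \<noteq> 0" using c by simp
    have e: "a - \<kappa> c * b = - \<kappa> c * (b - \<kappa> (inverse c) * a)"
      using c by (simp add: algebra_simps flip: \<kappa>_mult)
    have h: "b - \<kappa> (inverse c) * a \<noteq> 0 \<and> w (b - \<kappa> (inverse c) * a) = w a"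
      using F ci by (simp add: Fin_def)
    show ?thesis unfolding e using h c F by (simp add: w_mult \<kappa>_nz w_\<kappa> Fin_def)
  qed
  then show ?thesis using F by (simp add: Fin_def)
qed

lemma stable:
  fixes Good :: "'L \<times> 'L \<Rightarrow> bool"
  assumes G1: "\<And>a b. Good (a, b) \<Longrightarrow> w a < w b \<Longrightarrow> Good (a, b / a)"
    and G2: "\<And>a b c. Good (a, b) \<Longrightarrow> c \<noteq> 0 \<Longrightarrow> b - \<kappa> c * a \<noteq> 0 \<Longrightarrow> Good (a, b - \<kappa> c * a)"
    and G3: "\<And>a b. Good (a, b) \<Longrightarrow> a \<noteq> 0 \<and> b \<noteq> 0 \<and> m \<le> w a \<and> m \<le> w b \<and> \<not> Fin (a, b)"
    and st: "Good (x1, x2)" "w x1 = m" "1 \<le> m"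
  shows "\<exists>\<Phi>. x2 = ev x1 0 (fps_const \<Phi>)"
proof -
  have x10: "x1 \<noteq> 0" using G3[OF st(1)] by simp
  define P where "P u \<longleftrightarrow> u = 0 \<or> Good (x1, u)" for u
  have step: "\<exists>c u'. P u' \<and> u = \<kappa> c * x1 + x1 * u'" if Pu: "P u" for u
  proof (cases "u = 0")
    case True
    then show ?thesis by (intro exI[of _ 0] exI[of _ 0]) (simp add: P_def)
  next
    case False
    then have Gu: "Good (x1, u)" using Pu by (simp add: P_def)
    have wu: "m \<le> w u" and nf: "\<not> Fin (x1, u)" using G3[OF Gu] by auto
    show ?thesis
    proof (cases "w x1 < w u")
      case True
      have "Good (x1, u / x1)" by (rule G1[OF Gu True])
      then show ?thesis using x10 by (intro exI[of _ 0] exI[of _ "u / x1"]) (simp add: P_def)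
    next
      case False
      then have eq: "w x1 = w u" using wu st by simp
      then obtain c where c: "c \<noteq> 0" "\<not> (u - \<kappa> c * x1 \<noteq> 0 \<and> w (u - \<kappa> c * x1) = w x1)"
        using nf by (auto simp: Fin_def)
      show ?thesis
      proof (cases "u - \<kappa> c * x1 = 0")
        case True
        then show ?thesis by (intro exI[of _ c] exI[of _ 0]) (simp add: P_def)
      next
        case d0: False
        have "min (w u) (w x1) \<le> w (u - \<kappa> c * x1)" by (rule w_lin[OF x10 \<open>u \<noteq> 0\<close> c(1) d0])
        then have lt: "w x1 < w (u - \<kappa> c * x1)" using c(2) d0 eq by auto
        have "Good (x1, u - \<kappa> c * x1)" by (rule G2[OF Gu c(1) d0])
        then have g: "Good (x1, (u - \<kappa> c * x1) / x1)" using G1 lt by blast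
        have e: "u = \<kappa> c * x1 + x1 * ((u - \<kappa> c * x1) / x1)" using x10 by simp
        show ?thesis using g e unfolding P_def by blast
      qed
    qed
  qed
  have "\<forall>u. \<exists>cu. P u \<longrightarrow> P (snd cu) \<and> u = \<kappa> (fst cu) * x1 + x1 * snd cu"
    using step by fastforce
  from choice[OF this] obtain stf where stf: "\<And>u. P u \<Longrightarrow> P (snd (stf u)) \<and> u = \<kappa> (fst (stf u)) * x1 + x1 * snd (stf u)"
    by blast
  define U where "U n = ((\<lambda>u. snd (stf u)) ^^ n) x2" for n
  define C where "C n = fst (stf (U n))" for n
  have U0: "U 0 = x2" and US: "U (Suc n) = snd (stf (U n))" for n by (simp_all add: U_def)
  have PU: "P (U n)" for n
    by (induction n) (use st(1) in \<open>simp_all add: U0 US P_def stf[unfolded P_def]\<close>)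
  have rep: "x2 = (\<Sum>i<n. \<kappa> (C i) * x1 ^ Suc i) + x1 ^ n * U n" for n
  proof (induction n)
    case 0 then show ?case by (simp add: U0)
  next
    case (Suc n)
    have "U n = \<kappa> (C n) * x1 + x1 * U (Suc n)" using stf[OF PU[of n]] by (simp add: C_def US)
    then have "x1 ^ n * U n = \<kappa> (C n) * x1 ^ Suc n + x1 ^ Suc n * U (Suc n)"
      by (simp add: algebra_simps)
    then show ?case using Suc.IH by simp
  qed
  define \<Phi> where "\<Phi> = Abs_fps (\<lambda>i. if i = 0 then 0 else C (i - 1))"
  have ok: "ok x1 0 m" using st x10 by (simp add: ok_def vge_def)
  have "x2 = ev x1 0 (fps_const \<Phi>)"
  proof (rule ev_eqI[OF ok])
    fix n
    have "psum x1 0 (fps_const \<Phi>) n = (\<Sum>i<Suc n. \<kappa> (\<Phi> $ i) * x1 ^ i)"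
      by (simp add: psum_const lessThan_Suc_atMost)
    also have "\<dots> = \<kappa> (\<Phi> $ 0) * x1 ^ 0 + (\<Sum>i<n. \<kappa> (\<Phi> $ Suc i) * x1 ^ Suc i)"
      by (rule sum.lessThan_Suc_shift)
    also have "\<dots> = (\<Sum>i<n. \<kappa> (C i) * x1 ^ Suc i)" by (simp add: \<Phi>_def)
    finally have ps: "psum x1 0 (fps_const \<Phi>) n = (\<Sum>i<n. \<kappa> (C i) * x1 ^ Suc i)" .
    have "vge w (x1 ^ n * U n) (int n * m + m)"
    proof (rule vge_mult)
      show "vge w (x1 ^ n) (int n * m)" by (rule vge_power) (simp add: vge_def st)
      show "vge w (U n) m" using PU[of n] G3 by (auto simp: P_def vge_def)
    qed
    moreover have "int (n + 1) \<le> int n * m + m"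
    proof -
      have "int n * 1 \<le> int n * m" using st(3) by (intro mult_left_mono) simp_all
      then show ?thesis using st(3) by simp
    qed
    ultimately have "vge w (x1 ^ n * U n) (int (n + 1))" by (rule vge_mono)
    then show "vge w (x2 - psum x1 0 (fps_const \<Phi>) n) (int (n + 1))"
      by (subst rep[of n]) (simp add: ps)
  qed
  then show ?thesis by blast
qed

lemma ev1_alg:
  assumes ok: "ok t 0 m" and b: "b = ev t 0 (fps_const \<Phi>)"
  shows "alg t b \<subseteq> {z. \<exists>G. z = ev t 0 (fps_const G)}"
proof (rule alg_sub)
  fix c have "\<kappa> c = ev t 0 (fps_const (fps_const c))" using ev_const[OF ok] by simp
  then show "\<kappa> c \<in> {z. \<exists>G. z = ev t 0 (fps_const G)}" by blast
next
  have "t = ev t 0 (fps_const fps_X)" using ev_X1[OF ok] by simp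
  then show "t \<in> {z. \<exists>G. z = ev t 0 (fps_const G)}" by blast
next
  show "b \<in> {z. \<exists>G. z = ev t 0 (fps_const G)}" using b by blast
next
  fix x y assume "x \<in> {z. \<exists>G. z = ev t 0 (fps_const G)}" "y \<in> {z. \<exists>G. z = ev t 0 (fps_const G)}"
  then obtain f g where fg: "x = ev t 0 (fps_const f)" "y = ev t 0 (fps_const g)" by blast
  then have "x + y = ev t 0 (fps_const (f + g))" "x * y = ev t 0 (fps_const (f * g))"
    using ev_add[OF ok] ev_mult[OF ok] by (simp_all flip: fps_const_add fps_const_mult)
  then show "x + y \<in> {z. \<exists>G. z = ev t 0 (fps_const G)}" "x * y \<in> {z. \<exists>G. z = ev t 0 (fps_const G)}"
    by blast+
qed

lemma no_arc':
  assumes t: "t \<noteq> 0" "w t = m" "1 \<le> m" and b: "b = ev t 0 (fps_const \<Phi>)"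
    and in1: "\<iota> (fps_const fps_X) \<in> alg t b" and in2: "\<iota> fps_X \<in> alg t b"
  shows False
proof -
  have ok: "ok t 0 m" using t by (simp add: ok_def vge_def)
  obtain G1 G2 where "\<iota> (fps_const fps_X) = ev t 0 (fps_const G1)" "\<iota> fps_X = ev t 0 (fps_const G2)"
    using ev1_alg[OF ok b] in1 in2 by blast
  then show False using no_arc[OF t] by blast
qed

lemma exists_final: "\<exists>p. Inv p \<and> Fin p"
proof (rule ccontr)
  assume nf: "\<not> (\<exists>p. Inv p \<and> Fin p)"
  define \<mu> where "\<mu> p = nat (min (w (fst p)) (w (snd p)))" for p :: "'L \<times> 'L"
  have "\<exists>k p. Inv p \<and> \<mu> p = k" using Inv_init by blast
  define m0 where "m0 = (LEAST k. \<exists>p. Inv p \<and> \<mu> p = k)"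
  obtain x where x: "Inv x" "\<mu> x = m0"
    using LeastI_ex[OF \<open>\<exists>k p. Inv p \<and> \<mu> p = k\<close>] m0_def by blast
  have minim: "m0 \<le> \<mu> p" if "Inv p" for p
    unfolding m0_def using that by (intro Least_le) blast
  define m where "m = int m0"
  have ge: "m \<le> w (fst p) \<and> m \<le> w (snd p)" if "Inv p" for p
    using minim[OF that] that by (auto simp: m_def \<mu>_def Inv_def)
  obtain a b where ab: "x = (a, b)" by fastforce
  have m1: "1 \<le> m" using x(1) x(2) ab by (auto simp: m_def \<mu>_def Inv_def)
  have mab: "m = min (w a) (w b)" using x ab m1 by (auto simp: m_def \<mu>_def Inv_def)
  have a0: "a \<noteq> 0" and b0: "b \<noteq> 0" and in1: "\<iota> (fps_const fps_X) \<in> alg a b" and in2: "\<iota> fps_X \<in> alg a b"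
    using x(1) ab by (auto simp: Inv_def)
  show False
  proof (cases "w a = m")
    case True
    have "\<exists>\<Phi>. b = ev a 0 (fps_const \<Phi>)"
    proof (rule stable[where Good = Inv and m = m])
      show "Inv (a', b' / a')" if "Inv (a', b')" "w a' < w b'" for a' b' by (rule Inv_mono1[OF that])
      show "Inv (a', b' - \<kappa> c * a')" if "Inv (a', b')" "c \<noteq> 0" "b' - \<kappa> c * a' \<noteq> 0" for a' b' c
        by (rule Inv_coord1[OF that])
      show "a' \<noteq> 0 \<and> b' \<noteq> 0 \<and> m \<le> w a' \<and> m \<le> w b' \<and> \<not> Fin (a', b')" if "Inv (a', b')" for a' b'
        using that ge[OF that] nf by (auto simp: Inv_def)
    qed (use x ab True m1 in auto)
    then obtain \<Phi> where "b = ev a 0 (fps_const \<Phi>)" by blast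
    then show False using no_arc'[OF a0 True m1 _ in1 in2] by blast
  next
    case False
    then have wb: "w b = m" using mab by auto
    have "\<exists>\<Phi>. a = ev b 0 (fps_const \<Phi>)"
    proof (rule stable[where Good = "\<lambda>p. Inv (snd p, fst p)" and m = m])
      show "Inv (snd (a', b' / a'), fst (a', b' / a'))" if "Inv (snd (a', b'), fst (a', b'))" "w a' < w b'" for a' b'
        using Inv_mono2[of b' a'] that by simp
      show "Inv (snd (a', b' - \<kappa> c * a'), fst (a', b' - \<kappa> c * a'))"
        if "Inv (snd (a', b'), fst (a', b'))" "c \<noteq> 0" "b' - \<kappa> c * a' \<noteq> 0" for a' b' c
        using Inv_coord2[of b' a' c] that by simp
      show "a' \<noteq> 0 \<and> b' \<noteq> 0 \<and> m \<le> w a' \<and> m \<le> w b' \<and> \<not> Fin (a', b')"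
        if "Inv (snd (a', b'), fst (a', b'))" for a' b'
      proof -
        have I: "Inv (b', a')" using that by simp
        have "\<not> Fin (b', a')" using nf I by blast
        then have "\<not> Fin (a', b')" using Fin_swap I by (auto simp: Inv_def)
        then show ?thesis using I ge[OF I] by (auto simp: Inv_def)
      qed
    qed (use x ab wb m1 in auto)
    then obtain \<Phi> where "a = ev b 0 (fps_const \<Phi>)" by blast
    then show False using no_arc'[OF b0 wb m1 _ ] in1 in2 alg_swap by blast
  qed
qed

end

context setting begin

lemma main:
  "\<exists>Y1 Y2.
     (transf w)\<^sup>*\<^sup>* (\<iota> (fps_const fps_X), \<iota> fps_X) (Y1, Y2) \<and>
     (\<forall>f. f \<noteq> 0 \<longrightarrow> (\<exists>l. ps_eval \<iota> w Y1 Y2 f l \<and> l \<noteq> 0 \<and> w l = int (ord2 f))) \<and>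
     (\<forall>a. \<exists>f g lf lg. g \<noteq> 0 \<and> ps_eval \<iota> w Y1 Y2 f lf \<and> ps_eval \<iota> w Y1 Y2 g lg
                      \<and> \<iota> a * lg = lf)"
proof -
  obtain p where p: "Inv p" "Fin p" using exists_final by blast
  obtain Y1 Y2 where pY: "p = (Y1, Y2)" by fastforce
  have fin: "final Y1 Y2" using p pY by (auto simp: Inv_def Fin_def final_def)
  define m where "m = w Y1"
  have ok: "ok Y1 Y2 m" using final_ok[OF fin] by (simp add: m_def)
  have m1: "1 \<le> m" using ok by (simp add: ok_def)
  have ex: "ev Y1 Y2 f \<noteq> 0 \<and> w (ev Y1 Y2 f) = m * int (ord2 f)" if "f \<noteq> 0" for f
    using final_exact[OF fin that] by (simp add: m_def)
  have sub: "alg (\<iota> (fps_const fps_X)) (\<iota> fps_X) \<subseteq> {z. \<exists>f. z = ev Y1 Y2 f}"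
  proof -
    have i1: "\<iota> (fps_const fps_X) \<in> alg Y1 Y2" and i2: "\<iota> fps_X \<in> alg Y1 Y2"
      using p pY by (simp_all add: Inv_def)
    have "alg (\<iota> (fps_const fps_X)) (\<iota> fps_X) \<subseteq> alg Y1 Y2"
      by (rule alg_sub[OF alg_const i1 i2 alg_add alg_mult])
    then show ?thesis using ev_alg[OF ok] by blast
  qed
  have partB: "\<exists>F. \<iota> a = ev Y1 Y2 F" for a
  proof (rule closure_ev[OF ok ex])
    fix N :: int
    have "\<iota> (trunc (nat N) a) \<in> {z. \<exists>f. z = ev Y1 Y2 f}" using sub \<iota>_trunc_alg[of "nat N" a] by (rule subsetD)
    then obtain f where f: "\<iota> (trunc (nat N) a) = ev Y1 Y2 f" by blast
    have "vge w (\<iota> a - ev Y1 Y2 f) (int (nat N + 1))" using trunc_vge[of a "nat N"] by (simp only: f)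
    moreover have "N \<le> int (nat N + 1)" by linarith
    ultimately have "vge w (\<iota> a - ev Y1 Y2 f) N" by (rule vge_mono)
    then show "\<exists>f. vge w (\<iota> a - ev Y1 Y2 f) N" by blast
  qed simp
  have vval: "\<exists>F::'k fps fps. F \<noteq> 0 \<and> v a = m * int (ord2 F)" if "a \<noteq> 0" for a
  proof -
    obtain F where F: "\<iota> a = ev Y1 Y2 F" using partB[of a] by (elim exE)
    have F0: "F \<noteq> 0"
    proof
      assume "F = 0"
      then have "\<iota> a = 0" using F ev_0[OF ok] by simp
      then show False using that by (simp add: \<iota>_eq0)
    qed
    have "v a = w (\<iota> a)" using w_\<iota>[OF that] by (rule sym)
    also have "\<dots> = w (ev Y1 Y2 F)" by (simp only: F)
    also have "\<dots> = m * int (ord2 F)" using ex[OF F0] by (rule conjunct2)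
    finally have "v a = m * int (ord2 F)" .
    then show ?thesis using F0 by blast
  qed
  have m_is_1: "m = 1"
  proof -
    obtain f g where fg: "f \<noteq> 0" "g \<noteq> 0" "v f = v g + 1" using vg unfolding value_group_Z_def by blast
    obtain F :: "'k fps fps" where F: "v f = m * int (ord2 F)" using vval[OF fg(1)] by blast
    obtain G :: "'k fps fps" where G: "v g = m * int (ord2 G)" using vval[OF fg(2)] by blast
    have "m * (int (ord2 F) - int (ord2 G)) = 1" using fg(3) F G by (simp add: algebra_simps)
    then show ?thesis using m1 pos_zmult_eq_1_iff by auto
  qed
  have A: "(transf w)\<^sup>*\<^sup>* (\<iota> (fps_const fps_X), \<iota> fps_X) (Y1, Y2)"
    using p pY by (simp add: Inv_def reach_def)
  have B: "\<forall>f. f \<noteq> 0 \<longrightarrow> (\<exists>l. ps_eval \<iota> w Y1 Y2 f l \<and> l \<noteq> 0 \<and> w l = int (ord2 f))"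
  proof (intro allI impI)
    fix f :: "'k fps fps" assume f0: "f \<noteq> 0"
    have "ps_eval \<iota> w Y1 Y2 f (ev Y1 Y2 f)" by (rule ps_eval_ev[OF ok])
    moreover have "ev Y1 Y2 f \<noteq> 0" "w (ev Y1 Y2 f) = int (ord2 f)" using ex[OF f0] m_is_1 by simp_all
    ultimately show "\<exists>l. ps_eval \<iota> w Y1 Y2 f l \<and> l \<noteq> 0 \<and> w l = int (ord2 f)" by blast
  qed
  have C: "\<forall>a. \<exists>f g lf lg. g \<noteq> 0 \<and> ps_eval \<iota> w Y1 Y2 f lf \<and> ps_eval \<iota> w Y1 Y2 g lg \<and> \<iota> a * lg = lf"
  proof
    fix a
    obtain F where F: "\<iota> a = ev Y1 Y2 F" using partB[of a] by (elim exE)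
    have "ps_eval \<iota> w Y1 Y2 1 1" using ps_eval_ev[OF ok, of 1] ev_1[OF ok] by simp
    moreover have "ps_eval \<iota> w Y1 Y2 F (\<iota> a)" using ps_eval_ev[OF ok, of F] F by simp
    moreover have "(1 :: 'k fps fps) \<noteq> 0" by simp
    moreover have "\<iota> a * 1 = \<iota> a" by simp
    ultimately show "\<exists>f g lf lg. g \<noteq> 0 \<and> ps_eval \<iota> w Y1 Y2 f lf \<and> ps_eval \<iota> w Y1 Y2 g lg \<and> \<iota> a * lg = lf"
      by blast
  qed
  show ?thesis using A B C by blast
qed

end

theorem theorem10:
  fixes v :: "'k::field_char_0 fps fps \<Rightarrow> int"
    and \<iota> :: "'k fps fps \<Rightarrow> 'L::field"
    and w :: "'L \<Rightarrow> int"
  assumes "alg_closed_type TYPE('k)"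
    and "discrete_val_R2 v"
    and "value_group_Z v"
    and "is_completion v \<iota> w"
  shows "\<exists>Y1 Y2.
     (transf w)\<^sup>*\<^sup>* (\<iota> X1, \<iota> X2) (Y1, Y2) \<and>
     (\<forall>f. f \<noteq> 0 \<longrightarrow> (\<exists>l. ps_eval \<iota> w Y1 Y2 f l \<and> l \<noteq> 0 \<and> w l = int (ord2 f))) \<and>
     (\<forall>a. \<exists>f g lf lg. g \<noteq> 0 \<and> ps_eval \<iota> w Y1 Y2 f lf \<and> ps_eval \<iota> w Y1 Y2 g lg
                      \<and> \<iota> a * lg = lf)"
proof -
  interpret setting v \<iota> w using assms by (unfold_locales)
  show ?thesis by (rule main)
qed

end
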